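(* Let $k\ge0$ and let $L$ be a language of pomsets of dimension at most $k$ all having empty source interface. If $L$ is recognizable (there exist a finite category $\mathcal D$, $K\subseteq\mathrm{Mor}(\mathcal D)$ and a functor $F:\mathrm{iiPoms}\to\mathcal D$ with $L=F^{-1}(K)$), then $L$ has a finite coherent presentation, i.e. there exist a finite $\mathrm{iiPoms}_{\le k}$-module $M$, a subset $J\subseteq M$ and a module homomorphism $\varphi:\mathrm{iiPoms}_{\le k}\to M$ with $L=\varphi^{-1}(J)$ such that for every conclist $U$ and all $P,Q\in\mathrm{iiPoms}_{\le k}(\emptyset,U)$: if $\varphi(P)=\varphi(Q)$ then $\varphi(P-A)=\varphi(Q-A)$ for all $A\subseteq U$.
   Context: Fix a finite alphabet $\Sigma$. Pomsets $(P,<,\dashrightarrow,\lambda,S,T)$: $P$ finite, $<$ a strict partial interval order, $\dashrightarrow$ acyclic relating (in one direction) distinct $<$-incomparable elements, $\lambda:P\to\Sigma$, $S$/$T$ sets of $<$-minimal/maximal elements viewed as conclists (finite totally ordered labelled sets); up to isomorphism. $\mathrm{iiPoms}$: category with objects conclists, morphisms $U\to V$ pomsets with source $U$ and target $V$, composition the gluing $P*Q$ (identify $T_P$ with $S_Q$; precedence $<_P\cup<_Q\cup(P\setminus T_P)\times(Q\setminus S_Q)$; event orders, labels united; source $S_P$, target $T_Q$), identities $\mathrm{id}_U=(U,\emptyset,\dashrightarrow,\lambda,U,U)$; $\mathrm{iiPoms}_{\le k}$: pomsets whose $<$-antichains have size $\le k$. For a pomset $P$ and $A\subseteq P$, $P-A$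 is the subpomset induced on $P\setminus A$ (restricted relations, labels and interfaces). A $\mathcal C$-module is a set $M$ with $\mathrm{src},\mathrm{tgt}:M\to\mathrm{Ob}(\mathcal C)$ and actions $M(U,V)\times\mathcal C(V,W)\to M(U,W)$ ($M(U,V)=\mathrm{src}^{-1}(U)\cap\mathrm{tgt}^{-1}(V)$), $m\cdot\alpha$, with $m\cdot\mathrm{id}=m$, $(m\cdot\alpha)\cdot\beta=m\cdot(\alpha\beta)$ (diagrammatic composition); homomorphisms preserve $\mathrm{src},\mathrm{tgt}$ and commute with the action; $\mathrm{iiPoms}_{\le k}$ is a module over itself via gluing. *)

theory Defs
  imports Main
begin

text \<open>A concrete pomset: events, precedence <, event order (dashed arrow), labelling,
  source interface S, target interface T. The category iiPoms has as morphisms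
  isomorphism classes of these; all notions below are isomorphism-invariant or are
  required to be so explicitly.\<close>

record 'a pom =
  ev   :: "nat set"
  prec :: "(nat \<times> nat) set"
  eord :: "(nat \<times> nat) set"
  lab  :: "nat \<Rightarrow> 'a"
  srcI :: "nat set"
  tgtI :: "nat set"

definition wf_pom :: "'a pom \<Rightarrow> bool" where
  "wf_pom P \<longleftrightarrow>
     finite (ev P)
   \<and> prec P \<subseteq> ev P \<times> ev P \<and> irrefl (prec P) \<and> trans (prec P)
   \<and> (\<forall>w x y z. (w,x) \<in> prec P \<and> (y,z) \<in> prec P \<longrightarrow> (w,z) \<in> prec P \<or> (y,x) \<in> prec P)
   \<and> eord P \<subseteq> ev P \<times> ev P \<and> acyclic (eord P)
   \<and> (\<forall>x y. (x,y) \<in> eord P \<longrightarrow> (x,y) \<notin> prec P \<and> (y,x) \<notin> prec P)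
   \<and> (\<forall>x\<in>ev P. \<forall>y\<in>ev P. x \<noteq> y \<and> (x,y) \<notin> prec P \<and> (y,x) \<notin> prec P
        \<longrightarrow> (x,y) \<in> eord P \<or> (y,x) \<in> eord P)
   \<and> srcI P \<subseteq> ev P \<and> (\<forall>x\<in>srcI P. \<forall>y. (y,x) \<notin> prec P)
   \<and> tgtI P \<subseteq> ev P \<and> (\<forall>x\<in>tgtI P. \<forall>y. (x,y) \<notin> prec P)"

definition antichain :: "'a pom \<Rightarrow> nat set \<Rightarrow> bool" where
  "antichain P A \<longleftrightarrow> A \<subseteq> ev P \<and> (\<forall>x\<in>A. \<forall>y\<in>A. (x,y) \<notin> prec P)"

definition dim_le :: "nat \<Rightarrow> 'a pom \<Rightarrow> bool" where
  "dim_le k P \<longleftrightarrow> (\<forall>A. antichain P A \<longrightarrow> card A \<le> k)"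

definition iiP :: "nat \<Rightarrow> 'a pom \<Rightarrow> bool" where
  "iiP k P \<longleftrightarrow> wf_pom P \<and> dim_le k P"

text \<open>A set of events viewed as a conclist: the list of its elements in event order,
  and the corresponding word of labels (conclists up to isomorphism = words).\<close>
definition clist :: "'a pom \<Rightarrow> nat set \<Rightarrow> nat list" where
  "clist P A = (THE xs. distinct xs \<and> set xs = A \<and> sorted_wrt (\<lambda>x y. (x,y) \<in> eord P) xs)"

definition cword :: "'a pom \<Rightarrow> nat set \<Rightarrow> 'a list" where
  "cword P A = map (lab P) (clist P A)"

definition s_word :: "'a pom \<Rightarrow> 'a list" where
  "s_word P = cword P (srcI P)"

definition t_word :: "'a pom \<Rightarrow> 'a list" where
  "t_word P = cword P (tgtI P)"

definition tnth :: "'a pom \<Rightarrow> nat \<Rightarrow> nat" where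
  "tnth P i = clist P (tgtI P) ! i"

definition pom_iso :: "'a pom \<Rightarrow> 'a pom \<Rightarrow> bool" where
  "pom_iso P Q \<longleftrightarrow> (\<exists>f. bij_betw f (ev P) (ev Q)
     \<and> (\<forall>x\<in>ev P. \<forall>y\<in>ev P. ((x,y) \<in> prec P \<longleftrightarrow> (f x, f y) \<in> prec Q)
                        \<and> ((x,y) \<in> eord P \<longleftrightarrow> (f x, f y) \<in> eord Q))
     \<and> (\<forall>x\<in>ev P. lab Q (f x) = lab P x)
     \<and> f ` srcI P = srcI Q \<and> f ` tgtI P = tgtI Q)"

text \<open>Gluing: R is (a representative of) P * Q. P embeds via f, Q via g; the images
  overlap exactly in the identified interfaces T_P = S_Q, identified by an
  event-order and label preserving bijection.\<close>
definition glue :: "'a pom \<Rightarrow> 'a pom \<Rightarrow> 'a pom \<Rightarrow> bool" where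
  "glue P Q R \<longleftrightarrow> (\<exists>f g.
       inj_on f (ev P) \<and> inj_on g (ev Q)
     \<and> ev R = f ` ev P \<union> g ` ev Q
     \<and> f ` ev P \<inter> g ` ev Q = f ` tgtI P
     \<and> f ` ev P \<inter> g ` ev Q = g ` srcI Q
     \<and> (\<forall>x\<in>tgtI P. \<forall>x'\<in>tgtI P. \<forall>y\<in>srcI Q. \<forall>y'\<in>srcI Q.
           f x = g y \<longrightarrow> f x' = g y' \<longrightarrow> ((x,x') \<in> eord P \<longleftrightarrow> (y,y') \<in> eord Q))
     \<and> (\<forall>x\<in>ev P. lab R (f x) = lab P x)
     \<and> (\<forall>y\<in>ev Q. lab R (g y) = lab Q y)
     \<and> prec R = map_prod f f ` prec P \<union> map_prod g g ` prec Q
                 \<union> (f ` (ev P - tgtI P)) \<times> (g ` (ev Q - srcI Q))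
     \<and> eord R = map_prod f f ` eord P \<union> map_prod g g ` eord Q
     \<and> srcI R = f ` srcI P \<and> tgtI R = g ` tgtI Q)"

definition idp :: "'a list \<Rightarrow> 'a pom" where
  "idp U = \<lparr>ev = {..<length U}, prec = {}, eord = {(i,j). i < j \<and> j < length U},
            lab = (\<lambda>i. U ! i), srcI = {..<length U}, tgtI = {..<length U}\<rparr>"

definition pminus :: "'a pom \<Rightarrow> nat set \<Rightarrow> 'a pom" where
  "pminus P A = \<lparr>ev = ev P - A,
                  prec = prec P \<inter> ((ev P - A) \<times> (ev P - A)),
                  eord = eord P \<inter> ((ev P - A) \<times> (ev P - A)),
                  lab = lab P, srcI = srcI P - A, tgtI = tgtI P - A\<rparr>"

text \<open>Composition is diagrammatic: dcomp f g = "first f then g".\<close>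
record ('o, 'm) cat =
  dObj :: "'o set"
  dMor :: "'m set"
  ddom :: "'m \<Rightarrow> 'o"
  dcod :: "'m \<Rightarrow> 'o"
  dcomp :: "'m \<Rightarrow> 'm \<Rightarrow> 'm"
  did :: "'o \<Rightarrow> 'm"

definition category :: "('o, 'm) cat \<Rightarrow> bool" where
  "category D \<longleftrightarrow>
     (\<forall>f\<in>dMor D. ddom D f \<in> dObj D \<and> dcod D f \<in> dObj D)
   \<and> (\<forall>a\<in>dObj D. did D a \<in> dMor D \<and> ddom D (did D a) = a \<and> dcod D (did D a) = a)
   \<and> (\<forall>f\<in>dMor D. \<forall>g\<in>dMor D. dcod D f = ddom D g \<longrightarrow>
        dcomp D f g \<in> dMor D \<and> ddom D (dcomp D f g) = ddom D f \<and> dcod D (dcomp D f g) = dcod D g)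
   \<and> (\<forall>f\<in>dMor D. dcomp D (did D (ddom D f)) f = f \<and> dcomp D f (did D (dcod D f)) = f)
   \<and> (\<forall>f\<in>dMor D. \<forall>g\<in>dMor D. \<forall>h\<in>dMor D. dcod D f = ddom D g \<longrightarrow> dcod D g = ddom D h \<longrightarrow>
        dcomp D (dcomp D f g) h = dcomp D f (dcomp D g h))"

definition finite_category :: "('o, 'm) cat \<Rightarrow> bool" where
  "finite_category D \<longleftrightarrow> category D \<and> finite (dObj D) \<and> finite (dMor D)"

text \<open>A functor iiPoms -> D: objects of iiPoms are conclists (words), morphisms are
  isomorphism classes of pomsets; Fm is required to be isomorphism-invariant.\<close>
definition iiPoms_functor :: "('o, 'm) cat \<Rightarrow> ('a list \<Rightarrow> 'o) \<Rightarrow> ('a pom \<Rightarrow> 'm) \<Rightarrow> bool" where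
  "iiPoms_functor D Fo Fm \<longleftrightarrow>
     (\<forall>U. Fo U \<in> dObj D)
   \<and> (\<forall>P. wf_pom P \<longrightarrow> Fm P \<in> dMor D \<and> ddom D (Fm P) = Fo (s_word P) \<and> dcod D (Fm P) = Fo (t_word P))
   \<and> (\<forall>P Q. wf_pom P \<and> wf_pom Q \<and> pom_iso P Q \<longrightarrow> Fm P = Fm Q)
   \<and> (\<forall>U. Fm (idp U) = did D (Fo U))
   \<and> (\<forall>P Q R. wf_pom P \<and> wf_pom Q \<and> wf_pom R \<and> glue P Q R \<longrightarrow> Fm R = dcomp D (Fm P) (Fm Q))"

text \<open>Objects of iiPoms_{<=k}: conclists of size at most k.\<close>
definition iiPoms_module ::
  "nat \<Rightarrow> 'b set \<Rightarrow> ('b \<Rightarrow> 'a list) \<Rightarrow> ('b \<Rightarrow> 'a list) \<Rightarrow> ('b \<Rightarrow> 'a pom \<Rightarrow> 'b) \<Rightarrow> bool" where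
  "iiPoms_module k M msrc mtgt act \<longleftrightarrow>
     (\<forall>m\<in>M. length (msrc m) \<le> k \<and> length (mtgt m) \<le> k)
   \<and> (\<forall>m\<in>M. \<forall>\<alpha>. iiP k \<alpha> \<and> s_word \<alpha> = mtgt m \<longrightarrow>
        act m \<alpha> \<in> M \<and> msrc (act m \<alpha>) = msrc m \<and> mtgt (act m \<alpha>) = t_word \<alpha>)
   \<and> (\<forall>m\<in>M. \<forall>\<alpha> \<beta>. iiP k \<alpha> \<and> iiP k \<beta> \<and> s_word \<alpha> = mtgt m \<and> pom_iso \<alpha> \<beta> \<longrightarrow> act m \<alpha> = act m \<beta>)
   \<and> (\<forall>m\<in>M. act m (idp (mtgt m)) = m)
   \<and> (\<forall>m\<in>M. \<forall>\<alpha> \<beta> \<gamma>. iiP k \<alpha> \<and> iiP k \<beta> \<and> iiP k \<gamma> \<and> s_word \<alpha> = mtgt m \<and> s_word \<beta> = t_word \<alpha>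
        \<and> glue \<alpha> \<beta> \<gamma> \<longrightarrow> act (act m \<alpha>) \<beta> = act m \<gamma>)"

text \<open>Module homomorphism from iiPoms_{<=k} (acting on itself by gluing) into M.\<close>
definition iiPoms_module_hom ::
  "nat \<Rightarrow> 'b set \<Rightarrow> ('b \<Rightarrow> 'a list) \<Rightarrow> ('b \<Rightarrow> 'a list) \<Rightarrow> ('b \<Rightarrow> 'a pom \<Rightarrow> 'b) \<Rightarrow> ('a pom \<Rightarrow> 'b) \<Rightarrow> bool" where
  "iiPoms_module_hom k M msrc mtgt act \<phi> \<longleftrightarrow>
     (\<forall>P. iiP k P \<longrightarrow> \<phi> P \<in> M \<and> msrc (\<phi> P) = s_word P \<and> mtgt (\<phi> P) = t_word P)
   \<and> (\<forall>P Q. iiP k P \<and> iiP k Q \<and> pom_iso P Q \<longrightarrow> \<phi> P = \<phi> Q)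
   \<and> (\<forall>P \<alpha> R. iiP k P \<and> iiP k \<alpha> \<and> iiP k R \<and> s_word \<alpha> = t_word P \<and> glue P \<alpha> R
        \<longrightarrow> \<phi> R = act (\<phi> P) \<alpha>)"

end

theory Submission
  imports Defs "HOL-Library.FuncSet"
begin


definition Hc :: "'a pom \<Rightarrow> nat set \<Rightarrow> bool" where
  "Hc P A \<longleftrightarrow> finite A \<and> finite (eord P) \<and> acyclic (eord P)
     \<and> (\<forall>x\<in>A. \<forall>y\<in>A. x \<noteq> y \<longrightarrow> (x,y) \<in> eord P \<or> (y,x) \<in> eord P)"

lemma acyc_asym: "acyclic r \<Longrightarrow> (x,y) \<in> r \<Longrightarrow> (y,x) \<notin> r"
  by (meson acyclic_def r_into_trancl' trancl_trans)

lemma sorted_unique: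
  "(\<And>x y. R x y \<Longrightarrow> \<not> R y x) \<Longrightarrow> distinct xs \<Longrightarrow> distinct ys \<Longrightarrow> set xs = set ys
   \<Longrightarrow> sorted_wrt R xs \<Longrightarrow> sorted_wrt R ys \<Longrightarrow> xs = ys"
proof (induction xs arbitrary: ys)
  case Nil then show ?case by simp
next
  case (Cons x xs)
  then obtain y ys' where ys: "ys = y # ys'" by (cases ys) auto
  have "x = y"
  proof (rule ccontr)
    assume "x \<noteq> y"
    have "y \<in> set (x # xs)" "x \<in> set (y # ys')" using Cons.prems(4) ys by auto
    then have "y \<in> set xs" "x \<in> set ys'" using \<open>x \<noteq> y\<close> by auto
    then have "R x y" "R y x" using Cons.prems ys by auto
    then show False using Cons.prems(1) by blast
  qed
  moreover have "set xs = set ys'"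
  proof -
    have "insert x (set xs) = insert x (set ys')" "x \<notin> set xs" "x \<notin> set ys'"
      using Cons.prems(2,3,4) ys \<open>x = y\<close> by auto
    then show ?thesis by (metis Diff_insert_absorb)
  qed
  ultimately show ?case using Cons ys by auto
qed

lemma exists_sorted:
  assumes "Hc P A"
  shows "\<exists>xs. distinct xs \<and> set xs = A \<and> sorted_wrt (\<lambda>x y. (x,y) \<in> eord P) xs"
proof -
  have fin: "finite A" and tot: "\<forall>x\<in>A. \<forall>y\<in>A. x \<noteq> y \<longrightarrow> (x,y) \<in> eord P \<or> (y,x) \<in> eord P"
    and w: "wf (eord P)"
    using assms finite_acyclic_wf unfolding Hc_def by auto
  show ?thesis using fin tot
  proof (induction "card A" arbitrary: A)
    case 0
    then show ?case by (intro exI[of _ "[]"]) auto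
  next
    case (Suc n)
    then have "A \<noteq> {}" by auto
    then obtain z where z: "z \<in> A" "\<And>y. (y, z) \<in> eord P \<Longrightarrow> y \<notin> A"
      using wfE_min'[OF w] by metis
    have "n = card (A - {z})" using Suc z by auto
    then obtain xs where xs: "distinct xs" "set xs = A - {z}" "sorted_wrt (\<lambda>x y. (x,y) \<in> eord P) xs"
    proof -
      have "finite (A - {z})" using Suc.prems(1) by simp
      moreover have "\<forall>x\<in>A - {z}. \<forall>y\<in>A - {z}. x \<noteq> y \<longrightarrow> (x,y) \<in> eord P \<or> (y,x) \<in> eord P"
        using Suc.prems(2) by simp
      ultimately show ?thesis using Suc.hyps(1)[OF \<open>n = card (A - {z})\<close>] that by blast
    qed
    have "\<forall>y\<in>set xs. (z,y) \<in> eord P"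
    proof
      fix y assume "y \<in> set xs"
      then have "y \<in> A" "y \<noteq> z" using xs(2) by auto
      then have "(z,y) \<in> eord P \<or> (y,z) \<in> eord P" using Suc.prems(2) z(1) by blast
      then show "(z,y) \<in> eord P" using z(2) \<open>y \<in> A\<close> by blast
    qed
    moreover have "distinct (z # xs)" using xs(1,2) by simp
    moreover have "set (z # xs) = A" using xs(2) z(1) by auto
    ultimately have "distinct (z # xs) \<and> set (z # xs) = A \<and> sorted_wrt (\<lambda>x y. (x,y) \<in> eord P) (z # xs)"
      using xs(3) by simp
    then show ?case by blast
  qed
qed

lemma clist_props:
  assumes "Hc P A"
  shows "distinct (clist P A) \<and> set (clist P A) = A \<and> sorted_wrt (\<lambda>x y. (x,y) \<in> eord P) (clist P A)"
proof -
  have as: "\<And>x y. (x,y) \<in> eord P \<Longrightarrow> (y,x) \<notin> eord P"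
    using assms acyc_asym unfolding Hc_def by metis
  have "\<exists>!xs. distinct xs \<and> set xs = A \<and> sorted_wrt (\<lambda>x y. (x,y) \<in> eord P) xs"
    using exists_sorted[OF assms] sorted_unique[of "\<lambda>x y. (x,y) \<in> eord P"] as by metis
  then show ?thesis unfolding clist_def by (rule theI')
qed

lemma clist_eq:
  assumes "Hc P A" "distinct xs" "set xs = A" "sorted_wrt (\<lambda>x y. (x,y) \<in> eord P) xs"
  shows "clist P A = xs"
proof -
  have as: "\<And>x y. (x,y) \<in> eord P \<Longrightarrow> (y,x) \<notin> eord P"
    using assms acyc_asym unfolding Hc_def by metis
  have cp: "distinct (clist P A) \<and> set (clist P A) = A \<and> sorted_wrt (\<lambda>x y. (x,y) \<in> eord P) (clist P A)"
    by (rule clist_props[OF assms(1)])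
  show ?thesis
    by (rule sorted_unique[of "\<lambda>x y. (x,y) \<in> eord P"]) (use cp assms as in auto)
qed

lemma clist_empty: "clist P {} = []"
  unfolding clist_def by (rule the_equality) simp_all

lemma wf_Hc:
  assumes "wf_pom P" "A \<subseteq> ev P" "\<forall>x\<in>A. \<forall>y\<in>A. (x,y) \<notin> prec P"
  shows "Hc P A"
proof -
  have "finite (ev P)" using assms unfolding wf_pom_def by auto
  then have "finite (eord P)" using assms unfolding wf_pom_def
    by (meson finite_SigmaI finite_subset)
  moreover have "acyclic (eord P)" using assms(1) unfolding wf_pom_def by blast
  moreover have "finite A" using assms(2) \<open>finite (ev P)\<close> finite_subset by blast
  moreover have "\<forall>x\<in>A. \<forall>y\<in>A. x \<noteq> y \<longrightarrow> (x,y) \<in> eord P \<or> (y,x) \<in> eord P"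
  proof (intro ballI impI)
    fix x y assume "x \<in> A" "y \<in> A" "x \<noteq> y"
    moreover have "\<forall>x\<in>ev P. \<forall>y\<in>ev P. x \<noteq> y \<and> (x,y) \<notin> prec P \<and> (y,x) \<notin> prec P
        \<longrightarrow> (x,y) \<in> eord P \<or> (y,x) \<in> eord P" using assms(1) unfolding wf_pom_def by blast
    ultimately show "(x,y) \<in> eord P \<or> (y,x) \<in> eord P" using assms(2,3) by blast
  qed
  ultimately show ?thesis unfolding Hc_def by blast
qed

lemma src_Hc: "wf_pom P \<Longrightarrow> Hc P (srcI P)"
  by (rule wf_Hc) (auto simp: wf_pom_def)

lemma tgt_Hc: "wf_pom P \<Longrightarrow> Hc P (tgtI P)"
  by (rule wf_Hc) (auto simp: wf_pom_def)

lemma clist_transfer: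
  assumes "Hc P A" "finite (eord Q)" "acyclic (eord Q)" "inj_on h A" "h ` A = B"
    "\<forall>x\<in>A. \<forall>y\<in>A. (x,y) \<in> eord P \<longrightarrow> (h x, h y) \<in> eord Q"
  shows "clist Q B = map h (clist P A)"
proof -
  have HB: "Hc Q B"
    using assms unfolding Hc_def by (smt (verit, ccfv_threshold) finite_imageI image_iff)
  have cp: "distinct (clist P A) \<and> set (clist P A) = A \<and> sorted_wrt (\<lambda>x y. (x,y) \<in> eord P) (clist P A)"
    by (rule clist_props[OF assms(1)])
  show ?thesis
  proof (rule clist_eq[OF HB])
    show "distinct (map h (clist P A))" using cp assms(4) by (simp add: distinct_map)
    show "set (map h (clist P A)) = B" using cp assms(5) by simp
    show "sorted_wrt (\<lambda>x y. (x, y) \<in> eord Q) (map h (clist P A))"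
      unfolding sorted_wrt_map
      by (rule sorted_wrt_mono_rel[of _ "\<lambda>x y. (x,y) \<in> eord P"]) (use cp assms(6) in auto)
  qed
qed



definition rem :: "nat set \<Rightarrow> 'b list \<Rightarrow> 'b list" where
  "rem I xs = map ((!) xs) (filter (\<lambda>i. i \<notin> I) [0..<length xs])"

lemma wf_pminus:
  assumes "wf_pom P" shows "wf_pom (pminus P X)"
proof -
  let ?S = "ev P - X"
  have p: "finite (ev P)" "prec P \<subseteq> ev P \<times> ev P" "irrefl (prec P)" "trans (prec P)"
    "\<forall>w x y z. (w,x) \<in> prec P \<and> (y,z) \<in> prec P \<longrightarrow> (w,z) \<in> prec P \<or> (y,x) \<in> prec P"
    "eord P \<subseteq> ev P \<times> ev P" "acyclic (eord P)"
    "\<forall>x y. (x,y) \<in> eord P \<longrightarrow> (x,y) \<notin> prec P \<and> (y,x) \<notin> prec P"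
    "\<forall>x\<in>ev P. \<forall>y\<in>ev P. x \<noteq> y \<and> (x,y) \<notin> prec P \<and> (y,x) \<notin> prec P
        \<longrightarrow> (x,y) \<in> eord P \<or> (y,x) \<in> eord P"
    "srcI P \<subseteq> ev P" "\<forall>x\<in>srcI P. \<forall>y. (y,x) \<notin> prec P"
    "tgtI P \<subseteq> ev P" "\<forall>x\<in>tgtI P. \<forall>y. (x,y) \<notin> prec P"
    using assms unfolding wf_pom_def by blast+
  have "irrefl (prec P \<inter> ?S \<times> ?S)" using p(3) unfolding irrefl_def by blast
  moreover have "trans (prec P \<inter> ?S \<times> ?S)" using p(4) unfolding trans_def by blast
  moreover have "acyclic (eord P \<inter> ?S \<times> ?S)" using p(7) acyclic_subset by blast
  moreover have "\<forall>w x y z. (w,x) \<in> prec P \<inter> ?S \<times> ?S \<and> (y,z) \<in> prec P \<inter> ?S \<times> ?S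
     \<longrightarrow> (w,z) \<in> prec P \<inter> ?S \<times> ?S \<or> (y,x) \<in> prec P \<inter> ?S \<times> ?S" using p(5) by blast
  moreover have "\<forall>x\<in>?S. \<forall>y\<in>?S. x \<noteq> y \<and> (x,y) \<notin> prec P \<inter> ?S \<times> ?S \<and> (y,x) \<notin> prec P \<inter> ?S \<times> ?S
        \<longrightarrow> (x,y) \<in> eord P \<inter> ?S \<times> ?S \<or> (y,x) \<in> eord P \<inter> ?S \<times> ?S" using p(9) by blast
  moreover have "finite ?S" using p(1) by simp
  moreover have "\<forall>x y. (x,y) \<in> eord P \<inter> ?S \<times> ?S \<longrightarrow> (x,y) \<notin> prec P \<inter> ?S \<times> ?S \<and> (y,x) \<notin> prec P \<inter> ?S \<times> ?S"
    using p(8) by blast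
  moreover have "srcI P - X \<subseteq> ?S" "tgtI P - X \<subseteq> ?S" using p(10,12) by blast+
  moreover have "\<forall>x\<in>srcI P - X. \<forall>y. (y,x) \<notin> prec P \<inter> ?S \<times> ?S" using p(11) by blast
  moreover have "\<forall>x\<in>tgtI P - X. \<forall>y. (x,y) \<notin> prec P \<inter> ?S \<times> ?S" using p(13) by blast
  moreover have "prec P \<inter> ?S \<times> ?S \<subseteq> ?S \<times> ?S" "eord P \<inter> ?S \<times> ?S \<subseteq> ?S \<times> ?S" by blast+
  ultimately show ?thesis unfolding wf_pom_def pminus_def pom.simps
    apply -
    apply (intro conjI)
                 apply assumption+
    done
qed

lemma dim_pminus: "dim_le k P \<Longrightarrow> dim_le k (pminus P X)"
proof -
  assume d: "dim_le k P"
  have "antichain P A" if "antichain (pminus P X) A" for A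
    using that unfolding antichain_def pminus_def by auto
  then show ?thesis using d unfolding dim_le_def by blast
qed

lemma iiP_pminus: "iiP k P \<Longrightarrow> iiP k (pminus P X)"
  unfolding iiP_def using wf_pminus dim_pminus by blast

lemma pminus_pminus: "pminus (pminus P X) Y = pminus P (X \<union> Y)"
  unfolding pminus_def by auto

lemma pminus_empty: "wf_pom P \<Longrightarrow> pminus P {} = P"
  unfolding pminus_def wf_pom_def by (auto simp: Int_absorb2)

lemma CL:
  assumes "wf_pom P" "A \<subseteq> ev P" "\<forall>x\<in>A. \<forall>y\<in>A. (x,y) \<notin> prec P"
  shows "clist (pminus P X) (A - X) = filter (\<lambda>x. x \<notin> X) (clist P A)"
proof -
  have H: "Hc P A" by (rule wf_Hc[OF assms])
  have H2: "Hc (pminus P X) (A - X)"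
    by (rule wf_Hc[OF wf_pminus[OF assms(1)]]) (use assms in \<open>auto simp: pminus_def\<close>)
  have cp: "distinct (clist P A) \<and> set (clist P A) = A \<and> sorted_wrt (\<lambda>x y. (x,y) \<in> eord P) (clist P A)"
    by (rule clist_props[OF H])
  show ?thesis
  proof (rule clist_eq[OF H2])
    show "distinct (filter (\<lambda>x. x \<notin> X) (clist P A))" using cp by simp
    show "set (filter (\<lambda>x. x \<notin> X) (clist P A)) = A - X" using cp by auto
    have "sorted_wrt (\<lambda>x y. (x,y) \<in> eord P) (filter (\<lambda>x. x \<notin> X) (clist P A))"
      using cp sorted_wrt_filter by blast
    then show "sorted_wrt (\<lambda>x y. (x, y) \<in> eord (pminus P X)) (filter (\<lambda>x. x \<notin> X) (clist P A))"
      by (rule sorted_wrt_mono_rel[rotated]) (use cp assms(2) in \<open>auto simp: pminus_def\<close>)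
  qed
qed

lemma filter_nth: "filter P xs = map ((!) xs) (filter (\<lambda>i. P (xs!i)) [0..<length xs])"
proof -
  have "filter P xs = filter P (map ((!) xs) [0..<length xs])" by (simp add: map_nth)
  also have "\<dots> = map ((!) xs) (filter (\<lambda>i. P (xs!i)) [0..<length xs])"
    by (simp add: filter_map comp_def)
  finally show ?thesis .
qed

lemma filter_idx:
  assumes "distinct cs" "I \<subseteq> {..<length cs}"
  shows "filter (\<lambda>x. x \<notin> (!) cs ` I) cs = map ((!) cs) (filter (\<lambda>i. i \<notin> I) [0..<length cs])"
proof -
  have "filter (\<lambda>x. x \<notin> (!) cs ` I) cs = map ((!) cs) (filter (\<lambda>i. cs ! i \<notin> (!) cs ` I) [0..<length cs])"
    by (rule filter_nth)
  also have "filter (\<lambda>i. cs ! i \<notin> (!) cs ` I) [0..<length cs] = filter (\<lambda>i. i \<notin> I) [0..<length cs]"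
  proof (rule filter_cong[OF refl])
    fix i assume "i \<in> set [0..<length cs]"
    then have i: "i < length cs" by simp
    show "(cs ! i \<notin> (!) cs ` I) = (i \<notin> I)"
    proof
      assume "cs ! i \<notin> (!) cs ` I" then show "i \<notin> I" by blast
    next
      assume "i \<notin> I"
      show "cs ! i \<notin> (!) cs ` I"
      proof
        assume "cs ! i \<in> (!) cs ` I"
        then obtain j where "j \<in> I" "cs ! i = cs ! j" by blast
        then have "i = j" using assms i nth_eq_iff_index_eq by blast
        then show False using \<open>i \<notin> I\<close> \<open>j \<in> I\<close> by blast
      qed
    qed
  qed
  finally show ?thesis .
qed

lemma tgt_antichain: "wf_pom P \<Longrightarrow> \<forall>x\<in>tgtI P. \<forall>y\<in>tgtI P. (x,y) \<notin> prec P"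
  unfolding wf_pom_def by blast
lemma src_antichain: "wf_pom P \<Longrightarrow> \<forall>x\<in>srcI P. \<forall>y\<in>srcI P. (x,y) \<notin> prec P"
  unfolding wf_pom_def by blast
lemma tgt_sub: "wf_pom P \<Longrightarrow> tgtI P \<subseteq> ev P"
  unfolding wf_pom_def by blast
lemma src_sub: "wf_pom P \<Longrightarrow> srcI P \<subseteq> ev P"
  unfolding wf_pom_def by blast

lemma tgt_clist_minus:
  assumes "wf_pom P" "I \<subseteq> {..<length (clist P (tgtI P))}"
  shows "clist (pminus P (tnth P ` I)) (tgtI (pminus P (tnth P ` I)))
       = map ((!) (clist P (tgtI P))) (filter (\<lambda>i. i \<notin> I) [0..<length (clist P (tgtI P))])"
proof -
  let ?cs = "clist P (tgtI P)"
  have e: "tnth P ` I = (!) ?cs ` I" unfolding tnth_def by auto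
  have "tgtI (pminus P (tnth P ` I)) = tgtI P - tnth P ` I" by (simp add: pminus_def)
  then have "clist (pminus P (tnth P ` I)) (tgtI (pminus P (tnth P ` I))) = filter (\<lambda>x. x \<notin> tnth P ` I) ?cs"
    using CL[OF assms(1) tgt_sub[OF assms(1)] tgt_antichain[OF assms(1)]] by simp
  also have "\<dots> = map ((!) ?cs) (filter (\<lambda>i. i \<notin> I) [0..<length ?cs])"
    unfolding e by (rule filter_idx[OF _ assms(2)]) (use clist_props[OF tgt_Hc[OF assms(1)]] in blast)
  finally show ?thesis .
qed

lemma length_t_word: "length (t_word P) = length (clist P (tgtI P))"
  unfolding t_word_def cword_def by simp

lemma t_word_minus:
  assumes "wf_pom P" "I \<subseteq> {..<length (t_word P)}"
  shows "t_word (pminus P (tnth P ` I)) = rem I (t_word P)"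
proof -
  have "t_word (pminus P (tnth P ` I)) = map (lab P) (map ((!) (clist P (tgtI P))) (filter (\<lambda>i. i \<notin> I) [0..<length (clist P (tgtI P))]))"
    unfolding t_word_def cword_def using tgt_clist_minus[OF assms(1)] assms(2)
    by (simp add: length_t_word pminus_def)
  then show ?thesis unfolding rem_def t_word_def cword_def by simp
qed

lemma tnth_minus:
  assumes "wf_pom P" "I \<subseteq> {..<length (t_word P)}" "j < length (rem I (t_word P))"
  shows "tnth (pminus P (tnth P ` I)) j = tnth P (filter (\<lambda>i. i \<notin> I) [0..<length (t_word P)] ! j)"
  using tgt_clist_minus[OF assms(1)] assms unfolding tnth_def
  by (simp add: length_t_word rem_def)

lemma length_clist: "Hc P A \<Longrightarrow> length (clist P A) = card A"
  using clist_props distinct_card by metis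

lemma len_tw: "iiP k P \<Longrightarrow> length (t_word P) \<le> k"
proof -
  assume a: "iiP k P"
  then have "antichain P (tgtI P)" unfolding iiP_def antichain_def wf_pom_def by blast
  then have "card (tgtI P) \<le> k" using a unfolding iiP_def dim_le_def by blast
  moreover have "wf_pom P" using a unfolding iiP_def by blast
  ultimately show ?thesis using length_clist[OF tgt_Hc] unfolding length_t_word by metis
qed

lemma len_sw: "iiP k P \<Longrightarrow> length (s_word P) \<le> k"
proof -
  assume a: "iiP k P"
  then have "antichain P (srcI P)" unfolding iiP_def antichain_def wf_pom_def by blast
  then have "card (srcI P) \<le> k" using a unfolding iiP_def dim_le_def by blast
  moreover have "wf_pom P" using a unfolding iiP_def by blast
  ultimately show ?thesis using length_clist[OF src_Hc] unfolding s_word_def cword_def length_map by metis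
qed

lemma s_word_empty: "wf_pom P \<Longrightarrow> s_word P = [] \<longleftrightarrow> srcI P = {}"
  using clist_props[OF src_Hc] unfolding s_word_def cword_def by (metis Nil_is_map_conv set_empty)



definition isoby :: "(nat \<Rightarrow> nat) \<Rightarrow> 'a pom \<Rightarrow> 'a pom \<Rightarrow> bool" where
  "isoby f P Q \<longleftrightarrow> bij_betw f (ev P) (ev Q)
     \<and> (\<forall>x\<in>ev P. \<forall>y\<in>ev P. ((x,y) \<in> prec P \<longleftrightarrow> (f x, f y) \<in> prec Q)
                        \<and> ((x,y) \<in> eord P \<longleftrightarrow> (f x, f y) \<in> eord Q))
     \<and> (\<forall>x\<in>ev P. lab Q (f x) = lab P x)
     \<and> f ` srcI P = srcI Q \<and> f ` tgtI P = tgtI Q"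

lemma pom_iso_isoby: "pom_iso P Q \<longleftrightarrow> (\<exists>f. isoby f P Q)"
  unfolding pom_iso_def isoby_def by blast

lemma wf_eord_fin: "wf_pom P \<Longrightarrow> finite (eord P)"
  unfolding wf_pom_def by (meson finite_SigmaI finite_subset)
lemma wf_eord_acyc: "wf_pom P \<Longrightarrow> acyclic (eord P)"
  unfolding wf_pom_def by blast

lemma iso_tclist:
  assumes "wf_pom P" "wf_pom Q" "isoby h P Q"
  shows "clist Q (tgtI Q) = map h (clist P (tgtI P))"
proof (rule clist_transfer[OF tgt_Hc[OF assms(1)] wf_eord_fin[OF assms(2)] wf_eord_acyc[OF assms(2)]])
  have b: "bij_betw h (ev P) (ev Q)" using assms(3) unfolding isoby_def by blast
  show "inj_on h (tgtI P)" using b tgt_sub[OF assms(1)] bij_betw_imp_inj_on inj_on_subset by blast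
  show "h ` tgtI P = tgtI Q" using assms(3) unfolding isoby_def by blast
  show "\<forall>x\<in>tgtI P. \<forall>y\<in>tgtI P. (x, y) \<in> eord P \<longrightarrow> (h x, h y) \<in> eord Q"
    using assms(3) tgt_sub[OF assms(1)] unfolding isoby_def by blast
qed

lemma iso_sclist:
  assumes "wf_pom P" "wf_pom Q" "isoby h P Q"
  shows "clist Q (srcI Q) = map h (clist P (srcI P))"
proof (rule clist_transfer[OF src_Hc[OF assms(1)] wf_eord_fin[OF assms(2)] wf_eord_acyc[OF assms(2)]])
  have b: "bij_betw h (ev P) (ev Q)" using assms(3) unfolding isoby_def by blast
  show "inj_on h (srcI P)" using b src_sub[OF assms(1)] bij_betw_imp_inj_on inj_on_subset by blast
  show "h ` srcI P = srcI Q" using assms(3) unfolding isoby_def by blast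
  show "\<forall>x\<in>srcI P. \<forall>y\<in>srcI P. (x, y) \<in> eord P \<longrightarrow> (h x, h y) \<in> eord Q"
    using assms(3) src_sub[OF assms(1)] unfolding isoby_def by blast
qed

lemma iso_t_word:
  assumes "wf_pom P" "wf_pom Q" "isoby h P Q"
  shows "t_word Q = t_word P"
proof -
  have "\<forall>x\<in>set (clist P (tgtI P)). lab Q (h x) = lab P x"
    using assms(3) tgt_sub[OF assms(1)] clist_props[OF tgt_Hc[OF assms(1)]] unfolding isoby_def by blast
  then show ?thesis unfolding t_word_def cword_def iso_tclist[OF assms] by simp
qed

lemma iso_s_word:
  assumes "wf_pom P" "wf_pom Q" "isoby h P Q"
  shows "s_word Q = s_word P"
proof -
  have "\<forall>x\<in>set (clist P (srcI P)). lab Q (h x) = lab P x"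
    using assms(3) src_sub[OF assms(1)] clist_props[OF src_Hc[OF assms(1)]] unfolding isoby_def by blast
  then show ?thesis unfolding s_word_def cword_def iso_sclist[OF assms] by simp
qed

lemma iso_tnth:
  assumes "wf_pom P" "wf_pom Q" "isoby h P Q" "I \<subseteq> {..<length (t_word P)}"
  shows "tnth Q ` I = h ` tnth P ` I"
proof -
  have "\<forall>i\<in>I. tnth Q i = h (tnth P i)"
    using assms(4) unfolding tnth_def iso_tclist[OF assms(1-3)] length_t_word by auto
  then show ?thesis by (simp add: image_image)
qed

lemma iso_pminus:
  assumes "isoby h P Q" "X \<subseteq> ev P" "wf_pom P"
  shows "isoby h (pminus P X) (pminus Q (h ` X))"
proof -
  have b: "bij_betw h (ev P) (ev Q)" using assms(1) unfolding isoby_def by blast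
  have inj: "inj_on h (ev P)" using b bij_betw_imp_inj_on by blast
  have im: "h ` ev P = ev Q" using b bij_betw_imp_surj_on by blast
  have d: "h ` (A - X) = h ` A - h ` X" if "A \<subseteq> ev P" for A
    by (rule inj_on_image_set_diff[OF inj]) (use that assms(2) in auto)
  have b2: "bij_betw h (ev P - X) (ev Q - h ` X)"
    using d[of "ev P"] im inj inj_on_diff unfolding bij_betw_def by auto
  have s: "srcI P \<subseteq> ev P" "tgtI P \<subseteq> ev P" using src_sub tgt_sub assms(3) by blast+
  show ?thesis
    unfolding isoby_def
  proof (intro conjI)
    show "bij_betw h (ev (pminus P X)) (ev (pminus Q (h ` X)))" using b2 by (simp add: pminus_def)
    have "h x \<in> ev Q - h ` X" if "x \<in> ev P - X" for x by (rule bij_betw_apply[OF b2 that])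
    then show "\<forall>x\<in>ev (pminus P X). \<forall>y\<in>ev (pminus P X).
       ((x, y) \<in> prec (pminus P X)) = ((h x, h y) \<in> prec (pminus Q (h ` X))) \<and>
       ((x, y) \<in> eord (pminus P X)) = ((h x, h y) \<in> eord (pminus Q (h ` X)))"
      using assms(1) unfolding isoby_def pminus_def by auto
    show "\<forall>x\<in>ev (pminus P X). lab (pminus Q (h ` X)) (h x) = lab (pminus P X) x"
      using assms(1) unfolding isoby_def pminus_def by auto
    show "h ` srcI (pminus P X) = srcI (pminus Q (h ` X))"
      using d[OF s(1)] assms(1) unfolding isoby_def pminus_def by auto
    show "h ` tgtI (pminus P X) = tgtI (pminus Q (h ` X))"
      using d[OF s(2)] assms(1) unfolding isoby_def pminus_def by auto
  qed
qed

lemma iso_pminus_tnth: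
  assumes "wf_pom P" "wf_pom Q" "isoby h P Q" "I \<subseteq> {..<length (t_word P)}"
  shows "pom_iso (pminus P (tnth P ` I)) (pminus Q (tnth Q ` I))"
proof -
  have "\<forall>i\<in>I. tnth P i \<in> tgtI P"
    using assms(4) clist_props[OF tgt_Hc[OF assms(1)]] nth_mem
    unfolding tnth_def length_t_word by fastforce
  then have "tnth P ` I \<subseteq> ev P" using tgt_sub[OF assms(1)] by blast
  then show ?thesis unfolding pom_iso_isoby iso_tnth[OF assms]
    using iso_pminus[OF assms(3) _ assms(1)] by blast
qed



definition glueby :: "(nat \<Rightarrow> nat) \<Rightarrow> (nat \<Rightarrow> nat) \<Rightarrow> 'a pom \<Rightarrow> 'a pom \<Rightarrow> 'a pom \<Rightarrow> bool" where
  "glueby f g P Q R \<longleftrightarrow>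
       inj_on f (ev P) \<and> inj_on g (ev Q)
     \<and> ev R = f ` ev P \<union> g ` ev Q
     \<and> f ` ev P \<inter> g ` ev Q = f ` tgtI P
     \<and> f ` ev P \<inter> g ` ev Q = g ` srcI Q
     \<and> (\<forall>x\<in>tgtI P. \<forall>x'\<in>tgtI P. \<forall>y\<in>srcI Q. \<forall>y'\<in>srcI Q.
           f x = g y \<longrightarrow> f x' = g y' \<longrightarrow> ((x,x') \<in> eord P \<longleftrightarrow> (y,y') \<in> eord Q))
     \<and> (\<forall>x\<in>ev P. lab R (f x) = lab P x)
     \<and> (\<forall>y\<in>ev Q. lab R (g y) = lab Q y)
     \<and> prec R = map_prod f f ` prec P \<union> map_prod g g ` prec Q
                 \<union> (f ` (ev P - tgtI P)) \<times> (g ` (ev Q - srcI Q))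
     \<and> eord R = map_prod f f ` eord P \<union> map_prod g g ` eord Q
     \<and> srcI R = f ` srcI P \<and> tgtI R = g ` tgtI Q"

lemma glue_glueby: "glue P Q R \<longleftrightarrow> (\<exists>f g. glueby f g P Q R)"
  unfolding glue_def glueby_def by blast

context
  fixes f g :: "nat \<Rightarrow> nat" and P Q R :: "'a pom"
  assumes wP: "wf_pom P" and wQ: "wf_pom Q" and wR: "wf_pom R" and gl: "glueby f g P Q R"
begin

lemma gl_facts:
  "inj_on f (ev P)" "inj_on g (ev Q)" "ev R = f ` ev P \<union> g ` ev Q"
  "f ` ev P \<inter> g ` ev Q = f ` tgtI P" "f ` ev P \<inter> g ` ev Q = g ` srcI Q"
  "\<forall>x\<in>ev P. lab R (f x) = lab P x" "\<forall>y\<in>ev Q. lab R (g y) = lab Q y"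
  "prec R = map_prod f f ` prec P \<union> map_prod g g ` prec Q
                 \<union> (f ` (ev P - tgtI P)) \<times> (g ` (ev Q - srcI Q))"
  "eord R = map_prod f f ` eord P \<union> map_prod g g ` eord Q"
  "srcI R = f ` srcI P" "tgtI R = g ` tgtI Q"
  subgoal using gl unfolding glueby_def by (elim conjE) assumption
  subgoal using gl unfolding glueby_def by (elim conjE) assumption
  subgoal using gl unfolding glueby_def by (elim conjE) assumption
  subgoal using gl unfolding glueby_def by (elim conjE) assumption
  subgoal using gl unfolding glueby_def by (elim conjE) assumption
  subgoal using gl unfolding glueby_def by (elim conjE) assumption
  subgoal using gl unfolding glueby_def by (elim conjE) assumption
  subgoal using gl unfolding glueby_def by (elim conjE) assumption
  subgoal using gl unfolding glueby_def by (elim conjE) assumption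
  subgoal using gl unfolding glueby_def by (elim conjE) assumption
  subgoal using gl unfolding glueby_def by (elim conjE) assumption
  done

lemma G1: "clist R (srcI R) = map f (clist P (srcI P))"
proof (rule clist_transfer[OF src_Hc[OF wP] wf_eord_fin[OF wR] wf_eord_acyc[OF wR]])
  show "inj_on f (srcI P)" using gl_facts(1) src_sub[OF wP] inj_on_subset by blast
  show "f ` srcI P = srcI R" using gl_facts(10) by simp
  show "\<forall>x\<in>srcI P. \<forall>y\<in>srcI P. (x, y) \<in> eord P \<longrightarrow> (f x, f y) \<in> eord R"
    using gl_facts(9) by auto
qed

lemma G2: "clist R (tgtI R) = map g (clist Q (tgtI Q))"
proof (rule clist_transfer[OF tgt_Hc[OF wQ] wf_eord_fin[OF wR] wf_eord_acyc[OF wR]])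
  show "inj_on g (tgtI Q)" using gl_facts(2) tgt_sub[OF wQ] inj_on_subset by blast
  show "g ` tgtI Q = tgtI R" using gl_facts(11) by simp
  show "\<forall>x\<in>tgtI Q. \<forall>y\<in>tgtI Q. (x, y) \<in> eord Q \<longrightarrow> (g x, g y) \<in> eord R"
    using gl_facts(9) by auto
qed

lemma G3: "map f (clist P (tgtI P)) = map g (clist Q (srcI Q))"
proof -
  have "clist R (f ` tgtI P) = map f (clist P (tgtI P))"
  proof (rule clist_transfer[OF tgt_Hc[OF wP] wf_eord_fin[OF wR] wf_eord_acyc[OF wR]])
    show "inj_on f (tgtI P)" using gl_facts(1) tgt_sub[OF wP] inj_on_subset by blast
    show "\<forall>x\<in>tgtI P. \<forall>y\<in>tgtI P. (x, y) \<in> eord P \<longrightarrow> (f x, f y) \<in> eord R"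
      using gl_facts(9) by auto
  qed simp
  moreover have "clist R (g ` srcI Q) = map g (clist Q (srcI Q))"
  proof (rule clist_transfer[OF src_Hc[OF wQ] wf_eord_fin[OF wR] wf_eord_acyc[OF wR]])
    show "inj_on g (srcI Q)" using gl_facts(2) src_sub[OF wQ] inj_on_subset by blast
    show "\<forall>x\<in>srcI Q. \<forall>y\<in>srcI Q. (x, y) \<in> eord Q \<longrightarrow> (g x, g y) \<in> eord R"
      using gl_facts(9) by auto
  qed simp
  moreover have "f ` tgtI P = g ` srcI Q" using gl_facts(4,5) by simp
  ultimately show ?thesis by simp
qed

lemma G_s_word: "s_word R = s_word P"
proof -
  have "\<forall>x\<in>set (clist P (srcI P)). lab R (f x) = lab P x"
    using gl_facts(6) src_sub[OF wP] clist_props[OF src_Hc[OF wP]] by blast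
  then show ?thesis unfolding s_word_def cword_def G1 by simp
qed

lemma G_t_word: "t_word R = t_word Q"
proof -
  have "\<forall>x\<in>set (clist Q (tgtI Q)). lab R (g x) = lab Q x"
    using gl_facts(7) tgt_sub[OF wQ] clist_props[OF tgt_Hc[OF wQ]] by blast
  then show ?thesis unfolding t_word_def cword_def G2 by simp
qed

lemma G_words: "t_word P = s_word Q"
proof -
  have a: "\<forall>x\<in>set (clist P (tgtI P)). lab R (f x) = lab P x"
    using gl_facts(6) tgt_sub[OF wP] clist_props[OF tgt_Hc[OF wP]] by blast
  have b: "\<forall>x\<in>set (clist Q (srcI Q)). lab R (g x) = lab Q x"
    using gl_facts(7) src_sub[OF wQ] clist_props[OF src_Hc[OF wQ]] by blast
  have "map (lab P) (clist P (tgtI P)) = map (lab R) (map f (clist P (tgtI P)))"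
    using a by (simp add: map_eq_conv)
  also have "\<dots> = map (lab R) (map g (clist Q (srcI Q)))"
    using G3 by simp
  also have "\<dots> = map (lab Q) (clist Q (srcI Q))"
    using b by (simp add: map_eq_conv)
  finally show ?thesis unfolding t_word_def s_word_def cword_def .
qed

lemma G_len: "length (clist P (tgtI P)) = length (clist Q (srcI Q))"
  using G3 by (metis length_map)

lemma G6: "I \<subseteq> {..<length (t_word Q)} \<Longrightarrow> tnth R ` I = g ` tnth Q ` I"
proof -
  assume "I \<subseteq> {..<length (t_word Q)}"
  then have "\<forall>i\<in>I. tnth R i = g (tnth Q i)" unfolding tnth_def G2 length_t_word by auto
  then show ?thesis by (simp add: image_image)
qed

lemma G_fX:
  assumes "Y \<subseteq> ev Q" "x \<in> ev P"
  shows "f x \<in> g ` Y \<longleftrightarrow> x \<in> tgtI P \<and> f x \<in> g ` Y"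
proof -
  have "f x \<in> g ` Y \<Longrightarrow> x \<in> tgtI P"
  proof -
    assume "f x \<in> g ` Y"
    then have "f x \<in> f ` ev P \<inter> g ` ev Q" using assms by blast
    then have "f x \<in> f ` tgtI P" using gl_facts(4) by simp
    then show "x \<in> tgtI P" using gl_facts(1) tgt_sub[OF wP] assms(2) inj_on_image_mem_iff by metis
  qed
  then show ?thesis by blast
qed

lemma G5:
  assumes "Y \<subseteq> ev Q"
  shows "{x \<in> tgtI P. f x \<in> g ` Y} = tnth P ` {i. i < length (clist Q (srcI Q)) \<and> clist Q (srcI Q) ! i \<in> Y}"
proof -
  let ?cp = "clist P (tgtI P)" and ?cq = "clist Q (srcI Q)"
  have cp: "distinct ?cp" "set ?cp = tgtI P" using clist_props[OF tgt_Hc[OF wP]] by blast+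
  have cq: "set ?cq = srcI Q" using clist_props[OF src_Hc[OF wQ]] by blast
  have key: "f (?cp ! i) = g (?cq ! i)" if "i < length ?cp" for i
    using G3 that by (metis nth_map G_len)
  have ginj: "g a \<in> g ` Y \<longleftrightarrow> a \<in> Y" if "a \<in> ev Q" for a
    using gl_facts(2) assms that inj_on_image_mem_iff by metis
  show ?thesis
  proof
    show "{x \<in> tgtI P. f x \<in> g ` Y} \<subseteq> tnth P ` {i. i < length ?cq \<and> ?cq ! i \<in> Y}"
    proof
      fix x assume x: "x \<in> {x \<in> tgtI P. f x \<in> g ` Y}"
      then obtain i where i: "i < length ?cp" "x = ?cp ! i" using cp(2) by (metis in_set_conv_nth mem_Collect_eq)
      have "?cq ! i \<in> srcI Q" using cq i G_len nth_mem by metis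
      then have "?cq ! i \<in> Y" using ginj[of "?cq ! i"] key[OF i(1)] x i src_sub[OF wQ] by auto
      then show "x \<in> tnth P ` {i. i < length ?cq \<and> ?cq ! i \<in> Y}"
        using i G_len unfolding tnth_def by auto
    qed
    show "tnth P ` {i. i < length ?cq \<and> ?cq ! i \<in> Y} \<subseteq> {x \<in> tgtI P. f x \<in> g ` Y}"
    proof
      fix x assume "x \<in> tnth P ` {i. i < length ?cq \<and> ?cq ! i \<in> Y}"
      then obtain i where i: "i < length ?cp" "?cq ! i \<in> Y" "x = ?cp ! i" unfolding tnth_def using G_len by auto
      have "x \<in> tgtI P" using i cp(2) nth_mem by metis
      moreover have "f x \<in> g ` Y" using key[OF i(1)] i by auto
      ultimately show "x \<in> {x \<in> tgtI P. f x \<in> g ` Y}" by blast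
    qed
  qed
qed


lemma wf_subs: "prec P \<subseteq> ev P \<times> ev P" "eord P \<subseteq> ev P \<times> ev P"
    "prec Q \<subseteq> ev Q \<times> ev Q" "eord Q \<subseteq> ev Q \<times> ev Q"
  subgoal using wP unfolding wf_pom_def by blast
  subgoal using wP unfolding wf_pom_def by blast
  subgoal using wQ unfolding wf_pom_def by blast
  subgoal using wQ unfolding wf_pom_def by blast
  done

lemma G4:
  assumes Y: "Y \<subseteq> ev Q"
  shows "glueby f g (pminus P {x \<in> tgtI P. f x \<in> g ` Y}) (pminus Q Y) (pminus R (g ` Y))"
proof -
  define X where "X = {x \<in> tgtI P. f x \<in> g ` Y}"
  define Z where "Z = g ` Y"
  have XT: "X \<subseteq> tgtI P" unfolding X_def by blast
  have fx: "f x \<in> Z \<longleftrightarrow> x \<in> X" if "x \<in> ev P" for x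
    using G_fX[OF Y that] unfolding X_def Z_def by blast
  have gy: "g y \<in> Z \<longleftrightarrow> y \<in> Y" if "y \<in> ev Q" for y
    using gl_facts(2) Y that inj_on_image_mem_iff unfolding Z_def by metis
  have fC: "f ` C - Z = f ` (C - X)" if "C \<subseteq> ev P" for C
    using fx that by blast
  have gC: "g ` C - Z = g ` (C - Y)" if "C \<subseteq> ev Q" for C
    using gy that by blast
  have hf: "map_prod f f ` A \<inter> (- Z) \<times> (- Z) = map_prod f f ` (A \<inter> (ev P - X) \<times> (ev P - X))"
    if "A \<subseteq> ev P \<times> ev P" for A
  proof
    show "map_prod f f ` A \<inter> (- Z) \<times> (- Z) \<subseteq> map_prod f f ` (A \<inter> (ev P - X) \<times> (ev P - X))"
    proof
      fix p assume "p \<in> map_prod f f ` A \<inter> (- Z) \<times> (- Z)"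
      then obtain a b where ab: "(a,b) \<in> A" "p = (f a, f b)" "f a \<notin> Z" "f b \<notin> Z" by auto
      then have "a \<in> ev P" "b \<in> ev P" using that by auto
      then have "a \<notin> X" "b \<notin> X" using fx ab by auto
      then show "p \<in> map_prod f f ` (A \<inter> (ev P - X) \<times> (ev P - X))"
        using ab \<open>a \<in> ev P\<close> \<open>b \<in> ev P\<close> by force
    qed
    show "map_prod f f ` (A \<inter> (ev P - X) \<times> (ev P - X)) \<subseteq> map_prod f f ` A \<inter> (- Z) \<times> (- Z)"
      using fx by force
  qed
  have hg: "map_prod g g ` A \<inter> (- Z) \<times> (- Z) = map_prod g g ` (A \<inter> (ev Q - Y) \<times> (ev Q - Y))"
    if "A \<subseteq> ev Q \<times> ev Q" for A
  proof
    show "map_prod g g ` A \<inter> (- Z) \<times> (- Z) \<subseteq> map_prod g g ` (A \<inter> (ev Q - Y) \<times> (ev Q - Y))"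
    proof
      fix p assume "p \<in> map_prod g g ` A \<inter> (- Z) \<times> (- Z)"
      then obtain a b where ab: "(a,b) \<in> A" "p = (g a, g b)" "g a \<notin> Z" "g b \<notin> Z" by auto
      then have "a \<in> ev Q" "b \<in> ev Q" using that by auto
      then have "a \<notin> Y" "b \<notin> Y" using gy ab by auto
      then show "p \<in> map_prod g g ` (A \<inter> (ev Q - Y) \<times> (ev Q - Y))"
        using ab \<open>a \<in> ev Q\<close> \<open>b \<in> ev Q\<close> by force
    qed
    show "map_prod g g ` (A \<inter> (ev Q - Y) \<times> (ev Q - Y)) \<subseteq> map_prod g g ` A \<inter> (- Z) \<times> (- Z)"
      using gy by force
  qed
  have pR: "prec R \<subseteq> ev R \<times> ev R" "eord R \<subseteq> ev R \<times> ev R" using wR unfolding wf_pom_def by blast+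
  have W: "A \<inter> (ev R - Z) \<times> (ev R - Z) = A \<inter> (- Z) \<times> (- Z)" if "A \<subseteq> ev R \<times> ev R" for A
    using that by blast
  have tP: "tgtI P \<subseteq> ev P" "srcI P \<subseteq> ev P" using tgt_sub[OF wP] src_sub[OF wP] by blast+
  have sQ: "srcI Q \<subseteq> ev Q" "tgtI Q \<subseteq> ev Q" using src_sub[OF wQ] tgt_sub[OF wQ] by blast+
  have e1: "ev P - X - (tgtI P - X) = ev P - tgtI P" using XT by blast
  have e2: "ev Q - Y - (srcI Q - Y) = (ev Q - srcI Q) - Y" by blast
  have prod: "(f ` (ev P - tgtI P) \<times> g ` (ev Q - srcI Q)) \<inter> (- Z) \<times> (- Z)
      = f ` (ev P - tgtI P) \<times> g ` ((ev Q - srcI Q) - Y)"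
  proof -
    have "f ` (ev P - tgtI P) - Z = f ` (ev P - tgtI P)" using fC[of "ev P - tgtI P"] XT by auto
    moreover have "g ` (ev Q - srcI Q) - Z = g ` ((ev Q - srcI Q) - Y)" using gC[of "ev Q - srcI Q"] by auto
    ultimately show ?thesis by blast
  qed
  show ?thesis
    unfolding X_def[symmetric] unfolding Z_def[symmetric] glueby_def
  proof (intro conjI)
    show "inj_on f (ev (pminus P X))" using gl_facts(1) by (simp add: pminus_def inj_on_diff)
    show "inj_on g (ev (pminus Q Y))" using gl_facts(2) by (simp add: pminus_def inj_on_diff)
    show "ev (pminus R Z) = f ` ev (pminus P X) \<union> g ` ev (pminus Q Y)"
      using gl_facts(3) fC[of "ev P"] gC[of "ev Q"] by (auto simp: pminus_def)
    have i: "f ` ev (pminus P X) \<inter> g ` ev (pminus Q Y) = (f ` ev P \<inter> g ` ev Q) - Z"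
      using fC[of "ev P"] gC[of "ev Q"] by (auto simp: pminus_def)
    show "f ` ev (pminus P X) \<inter> g ` ev (pminus Q Y) = f ` tgtI (pminus P X)"
      unfolding i gl_facts(4) using fC[OF tP(1)] by (simp add: pminus_def)
    show "f ` ev (pminus P X) \<inter> g ` ev (pminus Q Y) = g ` srcI (pminus Q Y)"
      unfolding i gl_facts(5) using gC[OF sQ(1)] by (simp add: pminus_def)
    show "\<forall>x\<in>tgtI (pminus P X). \<forall>x'\<in>tgtI (pminus P X). \<forall>y\<in>srcI (pminus Q Y). \<forall>y'\<in>srcI (pminus Q Y).
       f x = g y \<longrightarrow> f x' = g y' \<longrightarrow> ((x, x') \<in> eord (pminus P X)) = ((y, y') \<in> eord (pminus Q Y))"
      using gl tP sQ unfolding glueby_def pminus_def by auto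
    show "\<forall>x\<in>ev (pminus P X). lab (pminus R Z) (f x) = lab (pminus P X) x"
      using gl_facts(6) by (simp add: pminus_def)
    show "\<forall>y\<in>ev (pminus Q Y). lab (pminus R Z) (g y) = lab (pminus Q Y) y"
      using gl_facts(7) by (simp add: pminus_def)
    have "prec (pminus R Z) = prec R \<inter> (- Z) \<times> (- Z)" using W[OF pR(1)] by (simp add: pminus_def)
    also have "\<dots> = (map_prod f f ` prec P \<inter> (- Z) \<times> (- Z)) \<union> (map_prod g g ` prec Q \<inter> (- Z) \<times> (- Z))
        \<union> ((f ` (ev P - tgtI P) \<times> g ` (ev Q - srcI Q)) \<inter> (- Z) \<times> (- Z))"
      unfolding gl_facts(8) by blast
    also have "\<dots> = map_prod f f ` prec (pminus P X) \<union> map_prod g g ` prec (pminus Q Y) \<union>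
       f ` (ev (pminus P X) - tgtI (pminus P X)) \<times> g ` (ev (pminus Q Y) - srcI (pminus Q Y))"
      unfolding hf[OF wf_subs(1)] hg[OF wf_subs(3)] prod by (simp add: pminus_def e1 e2)
    finally show "prec (pminus R Z) = map_prod f f ` prec (pminus P X) \<union> map_prod g g ` prec (pminus Q Y) \<union>
       f ` (ev (pminus P X) - tgtI (pminus P X)) \<times> g ` (ev (pminus Q Y) - srcI (pminus Q Y))" .
    have "eord (pminus R Z) = eord R \<inter> (- Z) \<times> (- Z)" using W[OF pR(2)] by (simp add: pminus_def)
    also have "\<dots> = (map_prod f f ` eord P \<inter> (- Z) \<times> (- Z)) \<union> (map_prod g g ` eord Q \<inter> (- Z) \<times> (- Z))"
      unfolding gl_facts(9) by blast
    also have "\<dots> = map_prod f f ` eord (pminus P X) \<union> map_prod g g ` eord (pminus Q Y)"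
      unfolding hf[OF wf_subs(2)] hg[OF wf_subs(4)] by (simp add: pminus_def)
    finally show "eord (pminus R Z) = map_prod f f ` eord (pminus P X) \<union> map_prod g g ` eord (pminus Q Y)" .
    show "srcI (pminus R Z) = f ` srcI (pminus P X)"
      using gl_facts(10) fC[OF tP(2)] by (simp add: pminus_def)
    show "tgtI (pminus R Z) = g ` tgtI (pminus Q Y)"
      using gl_facts(11) gC[OF sQ(2)] by (simp add: pminus_def)
  qed
qed

end



lemma wf_idp: "wf_pom (idp u)"
proof -
  have "{(i,j). i < j \<and> j < length u} \<subseteq> less_than" by auto
  then have ac: "acyclic {(i,j). i < j \<and> j < length u}"
    using acyclic_subset wf_acyclic wf_less_than by blast
  show ?thesis unfolding wf_pom_def idp_def using ac by (auto simp: irrefl_def trans_def)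
qed

lemma clist_idp: "clist (idp u) {..<length u} = [0..<length u]"
proof (rule clist_eq)
  show "Hc (idp u) {..<length u}" by (rule wf_Hc[OF wf_idp]) (auto simp: idp_def)
  show "sorted_wrt (\<lambda>x y. (x, y) \<in> eord (idp u)) [0..<length u]"
    unfolding idp_def by (simp add: sorted_wrt_iff_nth_less)
qed auto

lemma idp_words: "t_word (idp u) = u" "s_word (idp u) = u"
  unfolding t_word_def s_word_def cword_def
  by (simp_all add: clist_idp[unfolded idp_def, simplified] idp_def map_nth)

lemma tnth_idp: "i < length u \<Longrightarrow> tnth (idp u) i = i"
  unfolding tnth_def using clist_idp[of u] by (simp add: idp_def)

lemma discrete_iso:
  assumes "wf_pom P" "prec P = {}" "srcI P = ev P" "tgtI P = ev P"
  shows "pom_iso (idp (t_word P)) P"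
proof -
  let ?cs = "clist P (tgtI P)"
  have cp: "distinct ?cs" "set ?cs = tgtI P" "sorted_wrt (\<lambda>x y. (x,y) \<in> eord P) ?cs"
    using clist_props[OF tgt_Hc[OF assms(1)]] by blast+
  have ac: "acyclic (eord P)" using wf_eord_acyc[OF assms(1)] .
  have n: "length (t_word P) = length ?cs" by (rule length_t_word)
  have b: "bij_betw ((!) ?cs) {..<length ?cs} (ev P)"
    using bij_betw_nth[OF cp(1)] cp(2) assms(4) by simp
  have eo: "(i < j \<and> j < length ?cs) \<longleftrightarrow> (?cs ! i, ?cs ! j) \<in> eord P"
    if "i < length ?cs" "j < length ?cs" for i j
  proof
    assume "i < j \<and> j < length ?cs"
    then show "(?cs ! i, ?cs ! j) \<in> eord P" using cp(3) sorted_wrt_nth_less by blast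
  next
    assume a: "(?cs ! i, ?cs ! j) \<in> eord P"
    have "i \<noteq> j" using a acyc_asym[OF ac] by blast
    moreover have "\<not> j < i"
    proof
      assume "j < i"
      then have "(?cs ! j, ?cs ! i) \<in> eord P" using cp(3) that sorted_wrt_nth_less by blast
      then show False using acyc_asym[OF ac a] by blast
    qed
    ultimately show "i < j \<and> j < length ?cs" using that by simp
  qed
  show ?thesis unfolding pom_iso_def
  proof (intro exI conjI)
    show "bij_betw ((!) ?cs) (ev (idp (t_word P))) (ev P)" using b n by (simp add: idp_def)
    show "\<forall>x\<in>ev (idp (t_word P)). \<forall>y\<in>ev (idp (t_word P)).
      ((x, y) \<in> prec (idp (t_word P))) = ((?cs ! x, ?cs ! y) \<in> prec P) \<and>
      ((x, y) \<in> eord (idp (t_word P))) = ((?cs ! x, ?cs ! y) \<in> eord P)"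
      using eo n assms(2) by (simp add: idp_def)
    show "\<forall>x\<in>ev (idp (t_word P)). lab P (?cs ! x) = lab (idp (t_word P)) x"
      using n by (simp add: idp_def t_word_def cword_def)
    show "(!) ?cs ` srcI (idp (t_word P)) = srcI P"
      using b n assms(3) by (simp add: idp_def bij_betw_def)
    show "(!) ?cs ` tgtI (idp (t_word P)) = tgtI P"
      using b n assms(4) by (simp add: idp_def bij_betw_def)
  qed
qed

definition idxs :: "'a pom \<Rightarrow> nat set \<Rightarrow> nat set" where
  "idxs \<alpha> Y = {i. i < length (clist \<alpha> (srcI \<alpha>)) \<and> clist \<alpha> (srcI \<alpha>) ! i \<in> Y}"

lemma s_word_minus:
  assumes "wf_pom P"
  shows "s_word (pminus P Y) = rem (idxs P Y) (s_word P)"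
proof -
  let ?cs = "clist P (srcI P)"
  have "s_word (pminus P Y) = map (lab P) (filter (\<lambda>x. x \<notin> Y) ?cs)"
    unfolding s_word_def cword_def
    using CL[OF assms src_sub[OF assms] src_antichain[OF assms], of Y] by (simp add: pminus_def)
  also have "filter (\<lambda>x. x \<notin> Y) ?cs = map ((!) ?cs) (filter (\<lambda>i. ?cs ! i \<notin> Y) [0..<length ?cs])"
    by (rule filter_nth)
  also have "filter (\<lambda>i. ?cs ! i \<notin> Y) [0..<length ?cs] = filter (\<lambda>i. i \<notin> idxs P Y) [0..<length ?cs]"
    by (rule filter_cong) (auto simp: idxs_def)
  finally show ?thesis unfolding rem_def s_word_def cword_def by simp
qed

lemma idxs_sub: "idxs P Y \<subseteq> {..<length (s_word P)}"
  unfolding idxs_def s_word_def cword_def by auto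



type_synonym ('a,'m) trp = "'a list \<times> 'a list \<times> (nat set \<Rightarrow> 'm)"

definition trip :: "('a pom \<Rightarrow> 'm) \<Rightarrow> 'a pom \<Rightarrow> ('a,'m) trp" where
  "trip Fm P = (s_word P, t_word P,
     \<lambda>I. if I \<subseteq> {..<length (t_word P)} then Fm (pminus P (tnth P ` I)) else undefined)"

definition actT :: "('o,'m) cat \<Rightarrow> ('a pom \<Rightarrow> 'm) \<Rightarrow> ('a,'m) trp \<Rightarrow> 'a pom \<Rightarrow> ('a,'m) trp" where
  "actT D Fm m \<alpha> = (fst m, t_word \<alpha>,
     \<lambda>I. if I \<subseteq> {..<length (t_word \<alpha>)}
         then dcomp D (snd (snd m) (idxs \<alpha> (tnth \<alpha> ` I))) (Fm (pminus \<alpha> (tnth \<alpha> ` I)))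
         else undefined)"

definition M0 :: "('o,'m) cat \<Rightarrow> ('a list \<Rightarrow> 'o) \<Rightarrow> nat \<Rightarrow> ('a,'m) trp set" where
  "M0 D Fo k = {(s,t,F). length s \<le> k \<and> length t \<le> k
     \<and> (\<forall>I. I \<subseteq> {..<length t} \<longrightarrow> F I \<in> dMor D \<and> dcod D (F I) = Fo (rem I t))
     \<and> (\<forall>I. \<not> I \<subseteq> {..<length t} \<longrightarrow> F I = undefined)}"

lemma idxs_cong:
  assumes "clist Q (srcI Q) = map f (clist P (srcI P))"
    and "\<And>i. i < length (clist P (srcI P)) \<Longrightarrow> f (clist P (srcI P) ! i) \<in> A \<longleftrightarrow> clist P (srcI P) ! i \<in> B"
  shows "idxs Q A = idxs P B"
  unfolding idxs_def assms(1) using assms(2) by auto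

context
  fixes D :: "('o,'m) cat" and Fo :: "'a list \<Rightarrow> 'o" and Fm :: "'a pom \<Rightarrow> 'm" and k :: nat
  assumes catD: "category D" and funD: "iiPoms_functor D Fo Fm"
begin

lemma Ff1: "wf_pom P \<Longrightarrow> Fm P \<in> dMor D \<and> ddom D (Fm P) = Fo (s_word P) \<and> dcod D (Fm P) = Fo (t_word P)"
  using funD unfolding iiPoms_functor_def by blast
lemma Ff2: "wf_pom P \<Longrightarrow> wf_pom Q \<Longrightarrow> pom_iso P Q \<Longrightarrow> Fm P = Fm Q"
  using funD unfolding iiPoms_functor_def by blast
lemma Ff3: "Fm (idp U) = did D (Fo U)"
  using funD unfolding iiPoms_functor_def by blast
lemma Ff4: "wf_pom P \<Longrightarrow> wf_pom Q \<Longrightarrow> wf_pom R \<Longrightarrow> glue P Q R \<Longrightarrow> Fm R = dcomp D (Fm P) (Fm Q)"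
  using funD unfolding iiPoms_functor_def by blast

lemma Cc: "f \<in> dMor D \<Longrightarrow> g \<in> dMor D \<Longrightarrow> dcod D f = ddom D g \<Longrightarrow>
   dcomp D f g \<in> dMor D \<and> ddom D (dcomp D f g) = ddom D f \<and> dcod D (dcomp D f g) = dcod D g"
  using catD unfolding category_def by blast
lemma Cid: "f \<in> dMor D \<Longrightarrow> dcomp D f (did D (dcod D f)) = f"
  using catD unfolding category_def by blast
lemma Cassoc: "f \<in> dMor D \<Longrightarrow> g \<in> dMor D \<Longrightarrow> h \<in> dMor D \<Longrightarrow> dcod D f = ddom D g \<Longrightarrow> dcod D g = ddom D h \<Longrightarrow>
        dcomp D (dcomp D f g) h = dcomp D f (dcomp D g h)"
  using catD unfolding category_def by blast

lemma tnth_sub: "wf_pom P \<Longrightarrow> I \<subseteq> {..<length (t_word P)} \<Longrightarrow> tnth P ` I \<subseteq> tgtI P"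
  using clist_props[OF tgt_Hc] nth_mem unfolding tnth_def length_t_word by fastforce

lemma Fm_minus: "wf_pom P \<Longrightarrow> I \<subseteq> {..<length (t_word P)} \<Longrightarrow>
   Fm (pminus P (tnth P ` I)) \<in> dMor D \<and> dcod D (Fm (pminus P (tnth P ` I))) = Fo (rem I (t_word P))"
  using Ff1[OF wf_pminus] t_word_minus by metis

lemma trip_M0: "iiP k P \<Longrightarrow> trip Fm P \<in> M0 D Fo k"
  unfolding trip_def M0_def using len_sw len_tw Fm_minus unfolding iiP_def by auto

lemma comp_ok:
  assumes m: "(s,t,F) \<in> M0 D Fo k" and w: "wf_pom \<alpha>" and st: "s_word \<alpha> = t"
    and I: "I \<subseteq> {..<length (t_word \<alpha>)}"
  shows "F (idxs \<alpha> (tnth \<alpha> ` I)) \<in> dMor D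
     \<and> dcod D (F (idxs \<alpha> (tnth \<alpha> ` I))) = ddom D (Fm (pminus \<alpha> (tnth \<alpha> ` I)))"
proof -
  have "idxs \<alpha> (tnth \<alpha> ` I) \<subseteq> {..<length t}" using idxs_sub st by blast
  then have "F (idxs \<alpha> (tnth \<alpha> ` I)) \<in> dMor D \<and> dcod D (F (idxs \<alpha> (tnth \<alpha> ` I))) = Fo (rem (idxs \<alpha> (tnth \<alpha> ` I)) t)"
    using m unfolding M0_def by blast
  moreover have "ddom D (Fm (pminus \<alpha> (tnth \<alpha> ` I))) = Fo (rem (idxs \<alpha> (tnth \<alpha> ` I)) t)"
    using Ff1[OF wf_pminus[OF w]] s_word_minus[OF w] st by simp
  ultimately show ?thesis by simp
qed

lemma act_M0:
  assumes m: "m \<in> M0 D Fo k" and a: "iiP k \<alpha>" and st: "s_word \<alpha> = fst (snd m)"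
  shows "actT D Fm m \<alpha> \<in> M0 D Fo k"
proof -
  obtain s t F where mm: "m = (s,t,F)" by (cases m) auto
  have w: "wf_pom \<alpha>" using a unfolding iiP_def by blast
  have ls: "length s \<le> k" using m mm unfolding M0_def by blast
  have "dcomp D (F (idxs \<alpha> (tnth \<alpha> ` I))) (Fm (pminus \<alpha> (tnth \<alpha> ` I))) \<in> dMor D
     \<and> dcod D (dcomp D (F (idxs \<alpha> (tnth \<alpha> ` I))) (Fm (pminus \<alpha> (tnth \<alpha> ` I)))) = Fo (rem I (t_word \<alpha>))"
    if I: "I \<subseteq> {..<length (t_word \<alpha>)}" for I
    using comp_ok[OF m[unfolded mm] w _ I] st mm Cc Fm_minus[OF w I] by simp
  then show ?thesis unfolding actT_def mm M0_def using ls len_tw[OF a] by auto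
qed

lemma act_id:
  assumes m: "m \<in> M0 D Fo k"
  shows "actT D Fm m (idp (fst (snd m))) = m"
proof -
  obtain s t F where mm: "m = (s,t,F)" by (cases m) auto
  have F: "\<forall>I. I \<subseteq> {..<length t} \<longrightarrow> F I \<in> dMor D \<and> dcod D (F I) = Fo (rem I t)"
     "\<forall>I. \<not> I \<subseteq> {..<length t} \<longrightarrow> F I = undefined" using m mm unfolding M0_def by blast+
  have "dcomp D (F (idxs (idp t) (tnth (idp t) ` I))) (Fm (pminus (idp t) (tnth (idp t) ` I))) = F I"
    if I: "I \<subseteq> {..<length t}" for I
  proof -
    have "\<forall>i\<in>I. tnth (idp t) i = i" using tnth_idp I by auto
    then have tn: "tnth (idp t) ` I = I" by simp
    have cs: "clist (idp t) (srcI (idp t)) = [0..<length t]" using clist_idp by (simp add: idp_def)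
    have ix: "idxs (idp t) I = I" unfolding idxs_def cs using I by auto
    let ?Q = "pminus (idp t) I"
    have wQ: "wf_pom ?Q" by (rule wf_pminus[OF wf_idp])
    have "pom_iso (idp (t_word ?Q)) ?Q"
      by (rule discrete_iso[OF wQ]) (simp_all add: pminus_def idp_def)
    then have "Fm ?Q = did D (Fo (t_word ?Q))" using Ff2[OF wf_idp wQ] Ff3 by metis
    also have "t_word ?Q = rem I t" using t_word_minus[OF wf_idp, of I t] I tn by (simp add: idp_words)
    finally have "Fm ?Q = did D (dcod D (F I))" using F I by simp
    moreover have "F I \<in> dMor D" using F I by blast
    ultimately show ?thesis unfolding tn ix using Cid by simp
  qed
  then show ?thesis unfolding actT_def mm using F(2) by (auto simp: idp_words)
qed


lemma act_iso:
  assumes m: "m \<in> M0 D Fo k" and a: "iiP k \<alpha>" and b: "iiP k \<beta>" and iso: "pom_iso \<alpha> \<beta>"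
  shows "actT D Fm m \<alpha> = actT D Fm m \<beta>"
proof -
  have wa: "wf_pom \<alpha>" and wb: "wf_pom \<beta>" using a b unfolding iiP_def by blast+
  obtain h where h: "isoby h \<alpha> \<beta>" using iso pom_iso_isoby by blast
  have tw: "t_word \<beta> = t_word \<alpha>" by (rule iso_t_word[OF wa wb h])
  have inj: "inj_on h (ev \<alpha>)" using h unfolding isoby_def bij_betw_def by blast
  have eq: "dcomp D (snd (snd m) (idxs \<alpha> (tnth \<alpha> ` I))) (Fm (pminus \<alpha> (tnth \<alpha> ` I)))
      = dcomp D (snd (snd m) (idxs \<beta> (tnth \<beta> ` I))) (Fm (pminus \<beta> (tnth \<beta> ` I)))"
    if I: "I \<subseteq> {..<length (t_word \<alpha>)}" for I
  proof -
    have tn: "tnth \<beta> ` I = h ` tnth \<alpha> ` I" by (rule iso_tnth[OF wa wb h I])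
    have sub: "tnth \<alpha> ` I \<subseteq> ev \<alpha>" using tnth_sub[OF wa I] tgt_sub[OF wa] by blast
    have cs: "clist \<beta> (srcI \<beta>) = map h (clist \<alpha> (srcI \<alpha>))" by (rule iso_sclist[OF wa wb h])
    have "idxs \<beta> (tnth \<beta> ` I) = idxs \<alpha> (tnth \<alpha> ` I)"
    proof -
      have "h (clist \<alpha> (srcI \<alpha>) ! i) \<in> h ` tnth \<alpha> ` I \<longleftrightarrow> clist \<alpha> (srcI \<alpha>) ! i \<in> tnth \<alpha> ` I"
        if "i < length (clist \<alpha> (srcI \<alpha>))" for i
      proof -
        have "clist \<alpha> (srcI \<alpha>) ! i \<in> ev \<alpha>"
          using that clist_props[OF src_Hc[OF wa]] src_sub[OF wa] nth_mem by blast
        then show ?thesis using inj sub inj_on_image_mem_iff by metis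
      qed
      then show ?thesis unfolding idxs_def cs tn
        by (intro Collect_cong) (metis length_map nth_map)
    qed
    moreover have "Fm (pminus \<alpha> (tnth \<alpha> ` I)) = Fm (pminus \<beta> (tnth \<beta> ` I))"
      using Ff2[OF wf_pminus[OF wa] wf_pminus[OF wb] iso_pminus_tnth[OF wa wb h I]] .
    ultimately show ?thesis by simp
  qed
  show ?thesis unfolding actT_def tw using eq by auto
qed

lemma trip_iso:
  assumes wa: "wf_pom \<alpha>" and wb: "wf_pom \<beta>" and iso: "pom_iso \<alpha> \<beta>"
  shows "trip Fm \<alpha> = trip Fm \<beta>"
proof -
  obtain h where h: "isoby h \<alpha> \<beta>" using iso pom_iso_isoby by blast
  have tw: "t_word \<beta> = t_word \<alpha>" by (rule iso_t_word[OF wa wb h])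
  have sw: "s_word \<beta> = s_word \<alpha>" by (rule iso_s_word[OF wa wb h])
  have "Fm (pminus \<alpha> (tnth \<alpha> ` I)) = Fm (pminus \<beta> (tnth \<beta> ` I))"
    if I: "I \<subseteq> {..<length (t_word \<alpha>)}" for I
    using Ff2[OF wf_pminus[OF wa] wf_pminus[OF wb] iso_pminus_tnth[OF wa wb h I]] .
  then show ?thesis unfolding trip_def tw sw by auto
qed

lemma hom_glue:
  assumes P: "iiP k P" and a: "iiP k \<alpha>" and R: "iiP k R" and gl: "glue P \<alpha> R"
  shows "trip Fm R = actT D Fm (trip Fm P) \<alpha>"
proof -
  have wP: "wf_pom P" and wa: "wf_pom \<alpha>" and wR: "wf_pom R" using P a R unfolding iiP_def by blast+
  obtain f g where fg: "glueby f g P \<alpha> R" using gl glue_glueby by blast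
  have tw: "t_word R = t_word \<alpha>" by (rule G_t_word[OF wP wa wR fg])
  have sw: "s_word R = s_word P" by (rule G_s_word[OF wP wa wR fg])
  have eq: "Fm (pminus R (tnth R ` I)) = dcomp D (snd (snd (trip Fm P)) (idxs \<alpha> (tnth \<alpha> ` I))) (Fm (pminus \<alpha> (tnth \<alpha> ` I)))"
    if I: "I \<subseteq> {..<length (t_word \<alpha>)}" for I
  proof -
    let ?Y = "tnth \<alpha> ` I"
    have Ysub: "?Y \<subseteq> ev \<alpha>" using tnth_sub[OF wa I] tgt_sub[OF wa] by blast
    have tR: "tnth R ` I = g ` ?Y" by (rule G6[OF wP wa wR fg I])
    have X: "{x \<in> tgtI P. f x \<in> g ` ?Y} = tnth P ` idxs \<alpha> ?Y"
      using G5[OF wP wa wR fg Ysub] unfolding idxs_def .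
    have g4: "glueby f g (pminus P (tnth P ` idxs \<alpha> ?Y)) (pminus \<alpha> ?Y) (pminus R (tnth R ` I))"
      using G4[OF wP wa wR fg Ysub] unfolding X tR .
    have fm: "Fm (pminus R (tnth R ` I)) = dcomp D (Fm (pminus P (tnth P ` idxs \<alpha> ?Y))) (Fm (pminus \<alpha> ?Y))"
      by (rule Ff4[OF wf_pminus[OF wP] wf_pminus[OF wa] wf_pminus[OF wR]]) (use g4 glue_glueby in blast)
    have "idxs \<alpha> ?Y \<subseteq> {..<length (t_word P)}"
      using idxs_sub[of \<alpha> ?Y] G_len[OF wP wa wR fg] unfolding length_t_word s_word_def cword_def by simp
    then show ?thesis unfolding fm trip_def by simp
  qed
  have "snd (snd (trip Fm R)) = (\<lambda>I. if I \<subseteq> {..<length (t_word \<alpha>)}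
         then dcomp D (snd (snd (trip Fm P)) (idxs \<alpha> (tnth \<alpha> ` I))) (Fm (pminus \<alpha> (tnth \<alpha> ` I)))
         else undefined)"
    by (rule ext) (auto simp: trip_def[of Fm R] tw eq)
  moreover have "fst (trip Fm R) = fst (trip Fm P)" "fst (snd (trip Fm R)) = t_word \<alpha>"
    by (simp_all add: trip_def sw tw)
  ultimately show ?thesis unfolding actT_def by (simp add: prod_eq_iff)
qed

lemma act_assoc:
  assumes m: "m \<in> M0 D Fo k" and a: "iiP k \<alpha>" and b: "iiP k \<beta>" and c: "iiP k \<gamma>"
    and st: "s_word \<alpha> = fst (snd m)" and st2: "s_word \<beta> = t_word \<alpha>" and gl: "glue \<alpha> \<beta> \<gamma>"
  shows "actT D Fm (actT D Fm m \<alpha>) \<beta> = actT D Fm m \<gamma>"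
proof -
  obtain s t F where mm: "m = (s,t,F)" by (cases m) auto
  have wa: "wf_pom \<alpha>" and wb: "wf_pom \<beta>" and wc: "wf_pom \<gamma>" using a b c unfolding iiP_def by blast+
  obtain f g where fg: "glueby f g \<alpha> \<beta> \<gamma>" using gl glue_glueby by blast
  have tw: "t_word \<gamma> = t_word \<beta>" by (rule G_t_word[OF wa wb wc fg])
  have eq: "dcomp D (snd (snd (actT D Fm m \<alpha>)) (idxs \<beta> (tnth \<beta> ` I))) (Fm (pminus \<beta> (tnth \<beta> ` I)))
     = dcomp D (F (idxs \<gamma> (tnth \<gamma> ` I))) (Fm (pminus \<gamma> (tnth \<gamma> ` I)))"
    if I: "I \<subseteq> {..<length (t_word \<beta>)}" for I
  proof -
    let ?Y = "tnth \<beta> ` I"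
    let ?J = "idxs \<beta> ?Y"
    let ?X = "tnth \<alpha> ` ?J"
    have Ysub: "?Y \<subseteq> ev \<beta>" using tnth_sub[OF wb I] tgt_sub[OF wb] by blast
    have J: "?J \<subseteq> {..<length (t_word \<alpha>)}" using idxs_sub[of \<beta> ?Y] st2 by simp
    have X: "{x \<in> tgtI \<alpha>. f x \<in> g ` ?Y} = ?X"
      using G5[OF wa wb wc fg Ysub] unfolding idxs_def .
    have tc: "tnth \<gamma> ` I = g ` ?Y" using G6[OF wa wb wc fg] I by simp
    have g4: "glueby f g (pminus \<alpha> ?X) (pminus \<beta> ?Y) (pminus \<gamma> (tnth \<gamma> ` I))"
      using G4[OF wa wb wc fg Ysub] unfolding X tc .
    have fm: "Fm (pminus \<gamma> (tnth \<gamma> ` I)) = dcomp D (Fm (pminus \<alpha> ?X)) (Fm (pminus \<beta> ?Y))"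
      by (rule Ff4[OF wf_pminus[OF wa] wf_pminus[OF wb] wf_pminus[OF wc]]) (use g4 glue_glueby in blast)
    have ix: "idxs \<gamma> (tnth \<gamma> ` I) = idxs \<alpha> ?X"
    proof -
      have cs: "clist \<gamma> (srcI \<gamma>) = map f (clist \<alpha> (srcI \<alpha>))" by (rule G1[OF wa wb wc fg])
      have "f (clist \<alpha> (srcI \<alpha>) ! i) \<in> g ` ?Y \<longleftrightarrow> clist \<alpha> (srcI \<alpha>) ! i \<in> ?X"
        if "i < length (clist \<alpha> (srcI \<alpha>))" for i
      proof -
        have "clist \<alpha> (srcI \<alpha>) ! i \<in> ev \<alpha>"
          using that clist_props[OF src_Hc[OF wa]] src_sub[OF wa] nth_mem by blast
        then have e: "f (clist \<alpha> (srcI \<alpha>) ! i) \<in> g ` ?Y \<longleftrightarrow> clist \<alpha> (srcI \<alpha>) ! i \<in> tgtI \<alpha> \<and> f (clist \<alpha> (srcI \<alpha>) ! i) \<in> g ` ?Y"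
          by (rule G_fX[OF wa wb wc fg Ysub])
        have "clist \<alpha> (srcI \<alpha>) ! i \<in> ?X \<longleftrightarrow> clist \<alpha> (srcI \<alpha>) ! i \<in> tgtI \<alpha> \<and> f (clist \<alpha> (srcI \<alpha>) ! i) \<in> g ` ?Y"
          unfolding X[symmetric] by simp
        then show ?thesis using e by simp
      qed
      then show ?thesis unfolding tc by (rule idxs_cong[OF cs])
    qed
    have F1: "snd (snd (actT D Fm m \<alpha>)) ?J = dcomp D (F (idxs \<alpha> ?X)) (Fm (pminus \<alpha> ?X))"
      unfolding actT_def mm using J by simp
    have co: "F (idxs \<alpha> ?X) \<in> dMor D \<and> dcod D (F (idxs \<alpha> ?X)) = ddom D (Fm (pminus \<alpha> ?X))"
      using comp_ok[OF m[unfolded mm] wa _ J] st mm by simp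
    have w1: "wf_pom (pminus \<alpha> ?X)" "wf_pom (pminus \<beta> ?Y)" "wf_pom (pminus \<gamma> (tnth \<gamma> ` I))"
      using wf_pminus wa wb wc by blast+
    have "t_word (pminus \<alpha> ?X) = s_word (pminus \<beta> ?Y)" by (rule G_words[OF w1 g4])
    then have co2: "dcod D (Fm (pminus \<alpha> ?X)) = ddom D (Fm (pminus \<beta> ?Y))"
      using Ff1[OF w1(1)] Ff1[OF w1(2)] by simp
    show ?thesis unfolding F1 fm ix
      by (rule Cassoc) (use co co2 Ff1 w1 in auto)
  qed
  have eq': "dcomp D (snd (snd (actT D Fm m \<alpha>)) (idxs \<beta> (tnth \<beta> ` I))) (Fm (pminus \<beta> (tnth \<beta> ` I)))
     = dcomp D (snd (snd m) (idxs \<gamma> (tnth \<gamma> ` I))) (Fm (pminus \<gamma> (tnth \<gamma> ` I)))"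
    if I: "I \<subseteq> {..<length (t_word \<beta>)}" for I
    using eq[OF I] unfolding mm by simp
  have "snd (snd (actT D Fm (actT D Fm m \<alpha>) \<beta>)) = snd (snd (actT D Fm m \<gamma>))"
    by (rule ext) (auto simp: actT_def[of D Fm "actT D Fm m \<alpha>" \<beta>] actT_def[of D Fm m \<gamma>] tw eq')
  moreover have "fst (actT D Fm (actT D Fm m \<alpha>) \<beta>) = fst (actT D Fm m \<gamma>)"
    "fst (snd (actT D Fm (actT D Fm m \<alpha>) \<beta>)) = fst (snd (actT D Fm m \<gamma>))"
    by (simp_all add: actT_def tw)
  ultimately show ?thesis by (simp add: prod_eq_iff)
qed

lemma trip_minus:
  assumes w: "wf_pom P" and s: "srcI P = {}" and U: "t_word P = U" and I: "I \<subseteq> {..<length U}"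
  shows "trip Fm (pminus P (tnth P ` I)) = ([], rem I U,
     \<lambda>J. if J \<subseteq> {..<length (rem I U)}
         then snd (snd (trip Fm P)) (I \<union> (\<lambda>j. filter (\<lambda>i. i \<notin> I) [0..<length U] ! j) ` J) else undefined)"
proof -
  let ?X = "tnth P ` I"
  let ?ps = "filter (\<lambda>i. i \<notin> I) [0..<length U]"
  have sw: "s_word (pminus P ?X) = []"
    unfolding s_word_def cword_def by (simp add: pminus_def s clist_empty)
  have tw: "t_word (pminus P ?X) = rem I U" using t_word_minus[OF w] U I by simp
  have lp: "length (rem I U) = length ?ps" unfolding rem_def by simp
  have eq: "Fm (pminus (pminus P ?X) (tnth (pminus P ?X) ` J))
     = snd (snd (trip Fm P)) (I \<union> (\<lambda>j. ?ps ! j) ` J)"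
    if J: "J \<subseteq> {..<length (rem I U)}" for J
  proof -
    have "\<forall>j\<in>J. tnth (pminus P ?X) j = tnth P (?ps ! j)"
      using tnth_minus[OF w] U I J by auto
    then have "tnth (pminus P ?X) ` J = tnth P ` ((\<lambda>j. ?ps ! j) ` J)" by (simp add: image_image)
    then have "?X \<union> tnth (pminus P ?X) ` J = tnth P ` (I \<union> (\<lambda>j. ?ps ! j) ` J)" by (simp add: image_Un)
    moreover have "I \<union> (\<lambda>j. ?ps ! j) ` J \<subseteq> {..<length (t_word P)}"
    proof -
      have "?ps ! j < length U" if "j \<in> J" for j
      proof -
        have "j < length ?ps" using J that lp by auto
        then have "?ps ! j \<in> set ?ps" by (rule nth_mem)
        then show ?thesis by simp
      qed
      then show ?thesis using I U by auto
    qed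
    ultimately show ?thesis unfolding pminus_pminus trip_def by simp
  qed
  show ?thesis unfolding trip_def[of Fm "pminus P ?X"] sw tw using eq by auto
qed

end



lemma M0_finite:
  assumes "finite (UNIV :: 'a set)" "finite (dMor D)"
  shows "finite (M0 D Fo k :: ('a,'m) trp set)"
proof -
  let ?Ls = "{xs :: 'a list. set xs \<subseteq> UNIV \<and> length xs \<le> k}"
  have fL: "finite ?Ls" by (rule finite_lists_length_le[OF assms(1)])
  have "M0 D Fo k \<subseteq> ?Ls \<times> (SIGMA t:?Ls. (Pow {..<length t} \<rightarrow>\<^sub>E dMor D))"
    unfolding M0_def by (auto simp: PiE_def Pi_def extensional_def)
  moreover have "finite (?Ls \<times> (SIGMA t:?Ls. (Pow {..<length t} \<rightarrow>\<^sub>E dMor D)))"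
    using fL assms(2) by (intro finite_SigmaI finite_PiE) auto
  ultimately show ?thesis using finite_subset by blast
qed

theorem mainTheorem6:
  fixes k :: nat
    and L :: "'a pom set"
    and D :: "('o, 'm) cat"
    and K :: "'m set"
    and Fo :: "'a list \<Rightarrow> 'o"
    and Fm :: "'a pom \<Rightarrow> 'm"
  assumes "finite (UNIV :: 'a set)"
    and "\<forall>P\<in>L. iiP k P \<and> srcI P = {}"
    and "finite_category D"
    and "K \<subseteq> dMor D"
    and "iiPoms_functor D Fo Fm"
    and "L = {P. wf_pom P \<and> Fm P \<in> K}"
  shows "\<exists>(M :: nat set) msrc mtgt act J \<phi>.
           finite M \<and> iiPoms_module k M msrc mtgt act \<and> J \<subseteq> M
         \<and> iiPoms_module_hom k M msrc mtgt act \<phi>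
         \<and> L = {P. iiP k P \<and> \<phi> P \<in> J}
         \<and> (\<forall>U P Q. iiP k P \<and> iiP k Q \<and> s_word P = [] \<and> s_word Q = [] \<and> t_word P = U \<and> t_word Q = U
               \<and> \<phi> P = \<phi> Q \<longrightarrow>
               (\<forall>I \<subseteq> {..<length U}. \<phi> (pminus P (tnth P ` I)) = \<phi> (pminus Q (tnth Q ` I))))"
proof -
  have catD: "category D" and fD: "finite (dMor D)" using assms(3) unfolding finite_category_def by blast+
  note funD = assms(5)
  let ?M0 = "M0 D Fo k :: ('a,'m) trp set"
  have fin: "finite ?M0" by (rule M0_finite[OF assms(1) fD])
  obtain h where hb: "bij_betw h ?M0 {0..<card ?M0}" using ex_bij_betw_finite_nat[OF fin] by blast
  have inj: "inj_on h ?M0" using hb bij_betw_imp_inj_on by blast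
  define dec where "dec = the_inv_into ?M0 h"
  have dh: "dec (h x) = x" if "x \<in> ?M0" for x unfolding dec_def using the_inv_into_f_f[OF inj that] .
  have decM: "dec n \<in> ?M0" if "n \<in> h ` ?M0" for n unfolding dec_def using the_inv_into_into[OF inj that] by blast
  have hd: "h (dec n) = n" if "n \<in> h ` ?M0" for n unfolding dec_def using f_the_inv_into_f[OF inj that] .
  define M where "M = h ` ?M0"
  define msrc where "msrc = (\<lambda>n. fst (dec n))"
  define mtgt where "mtgt = (\<lambda>n. fst (snd (dec n)))"
  define act where "act = (\<lambda>n \<alpha>. h (actT D Fm (dec n) \<alpha>))"
  define \<phi> where "\<phi> = (\<lambda>P. h (trip Fm P))"
  define J where "J = h ` {m \<in> ?M0. fst m = [] \<and> snd (snd m) {} \<in> K}"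
  have actM: "actT D Fm (dec n) \<alpha> \<in> ?M0" if "n \<in> M" "iiP k \<alpha>" "s_word \<alpha> = mtgt n" for n \<alpha>
  proof -
    have "dec n \<in> ?M0" using decM that(1) unfolding M_def by blast
    then show ?thesis using act_M0[OF catD funD, where m="dec n" and \<alpha>=\<alpha>] that(2,3) unfolding mtgt_def by blast
  qed
  have m1: "\<forall>m\<in>M. length (msrc m) \<le> k \<and> length (mtgt m) \<le> k"
  proof
    fix m assume "m \<in> M"
    then have "dec m \<in> ?M0" using decM M_def by blast
    then show "length (msrc m) \<le> k \<and> length (mtgt m) \<le> k" unfolding msrc_def mtgt_def M0_def by auto
  qed
  have m2: "\<forall>m\<in>M. \<forall>\<alpha>. iiP k \<alpha> \<and> s_word \<alpha> = mtgt m \<longrightarrow>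
        act m \<alpha> \<in> M \<and> msrc (act m \<alpha>) = msrc m \<and> mtgt (act m \<alpha>) = t_word \<alpha>"
  proof (intro ballI allI impI)
    fix m \<alpha> assume m: "m \<in> M" and a: "iiP k \<alpha> \<and> s_word \<alpha> = mtgt m"
    have am: "actT D Fm (dec m) \<alpha> \<in> ?M0" using actM m a by blast
    show "act m \<alpha> \<in> M \<and> msrc (act m \<alpha>) = msrc m \<and> mtgt (act m \<alpha>) = t_word \<alpha>"
      unfolding act_def msrc_def mtgt_def M_def dh[OF am] using am by (simp add: actT_def)
  qed
  have m3: "\<forall>m\<in>M. \<forall>\<alpha> \<beta>. iiP k \<alpha> \<and> iiP k \<beta> \<and> s_word \<alpha> = mtgt m \<and> pom_iso \<alpha> \<beta> \<longrightarrow> act m \<alpha> = act m \<beta>"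
  proof (intro ballI allI impI)
    fix m \<alpha> \<beta> assume m: "m \<in> M" and a: "iiP k \<alpha> \<and> iiP k \<beta> \<and> s_word \<alpha> = mtgt m \<and> pom_iso \<alpha> \<beta>"
    have "dec m \<in> ?M0" using decM m unfolding M_def by blast
    then show "act m \<alpha> = act m \<beta>" unfolding act_def
      using act_iso[OF catD funD, where m="dec m" and \<alpha>=\<alpha> and \<beta>=\<beta>] a by metis
  qed
  have m4: "\<forall>m\<in>M. act m (idp (mtgt m)) = m"
  proof
    fix m assume m: "m \<in> M"
    have "dec m \<in> ?M0" using decM m unfolding M_def by blast
    then show "act m (idp (mtgt m)) = m" unfolding act_def mtgt_def
      using act_id[OF catD funD, where m="dec m"] hd m M_def by simp
  qed
  have m5: "\<forall>m\<in>M. \<forall>\<alpha> \<beta> \<gamma>. iiP k \<alpha> \<and> iiP k \<beta> \<and> iiP k \<gamma> \<and> s_word \<alpha> = mtgt m \<and> s_word \<beta> = t_word \<alpha>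
        \<and> glue \<alpha> \<beta> \<gamma> \<longrightarrow> act (act m \<alpha>) \<beta> = act m \<gamma>"
  proof (intro ballI allI impI)
    fix m \<alpha> \<beta> \<gamma> assume m: "m \<in> M" and a: "iiP k \<alpha> \<and> iiP k \<beta> \<and> iiP k \<gamma> \<and> s_word \<alpha> = mtgt m \<and> s_word \<beta> = t_word \<alpha>
        \<and> glue \<alpha> \<beta> \<gamma>"
    have am: "actT D Fm (dec m) \<alpha> \<in> ?M0" using actM m a by blast
    have "dec m \<in> ?M0" using decM m unfolding M_def by blast
    then show "act (act m \<alpha>) \<beta> = act m \<gamma>" unfolding act_def dh[OF am]
      using act_assoc[OF catD funD, where m="dec m" and \<alpha>=\<alpha> and \<beta>=\<beta> and \<gamma>=\<gamma>] a unfolding mtgt_def by metis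
  qed
  have mod: "iiPoms_module k M msrc mtgt act"
    unfolding iiPoms_module_def by (intro conjI m1 m2 m3 m4 m5)
  have h1: "\<forall>P. iiP k P \<longrightarrow> \<phi> P \<in> M \<and> msrc (\<phi> P) = s_word P \<and> mtgt (\<phi> P) = t_word P"
  proof (intro allI impI)
    fix P :: "'a pom" assume P: "iiP k P"
    have tM: "trip Fm P \<in> ?M0" by (rule trip_M0[OF catD funD P])
    show "\<phi> P \<in> M \<and> msrc (\<phi> P) = s_word P \<and> mtgt (\<phi> P) = t_word P"
      unfolding \<phi>_def M_def msrc_def mtgt_def dh[OF tM] using tM by (simp add: trip_def)
  qed
  have h2: "\<forall>P Q. iiP k P \<and> iiP k Q \<and> pom_iso P Q \<longrightarrow> \<phi> P = \<phi> Q"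
  proof (intro allI impI)
    fix P Q :: "'a pom" assume a: "iiP k P \<and> iiP k Q \<and> pom_iso P Q"
    then show "\<phi> P = \<phi> Q" unfolding \<phi>_def using trip_iso[OF catD funD] unfolding iiP_def by metis
  qed
  have h3: "\<forall>P \<alpha> R. iiP k P \<and> iiP k \<alpha> \<and> iiP k R \<and> s_word \<alpha> = t_word P \<and> glue P \<alpha> R
        \<longrightarrow> \<phi> R = act (\<phi> P) \<alpha>"
  proof (intro allI impI)
    fix P \<alpha> R :: "'a pom" assume a: "iiP k P \<and> iiP k \<alpha> \<and> iiP k R \<and> s_word \<alpha> = t_word P \<and> glue P \<alpha> R"
    have tM: "trip Fm P \<in> ?M0" by (rule trip_M0[OF catD funD]) (use a in blast)
    show "\<phi> R = act (\<phi> P) \<alpha>" unfolding \<phi>_def act_def dh[OF tM]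
      using hom_glue[OF catD funD] a by metis
  qed
  have hom: "iiPoms_module_hom k M msrc mtgt act \<phi>"
    unfolding iiPoms_module_hom_def by (intro conjI h1 h2 h3)
  have JM: "J \<subseteq> M" unfolding J_def M_def by blast
  have LL: "L = {P. iiP k P \<and> \<phi> P \<in> J}"
  proof (intro set_eqI iffI)
    fix P assume P: "P \<in> L"
    then have iP: "iiP k P" and s: "srcI P = {}" and FK: "Fm P \<in> K" and w: "wf_pom P"
      using assms(2,6) by auto
    have tM: "trip Fm P \<in> ?M0" by (rule trip_M0[OF catD funD iP])
    have "fst (trip Fm P) = []" using s_word_empty[OF w] s by (simp add: trip_def)
    moreover have "snd (snd (trip Fm P)) {} = Fm P" using pminus_empty[OF w] by (simp add: trip_def)
    ultimately show "P \<in> {P. iiP k P \<and> \<phi> P \<in> J}" using iP FK tM unfolding J_def \<phi>_def by auto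
  next
    fix P assume "P \<in> {P. iiP k P \<and> \<phi> P \<in> J}"
    then have iP: "iiP k P" and pj: "h (trip Fm P) \<in> J" unfolding \<phi>_def by auto
    have w: "wf_pom P" using iP unfolding iiP_def by blast
    have tM: "trip Fm P \<in> ?M0" by (rule trip_M0[OF catD funD iP])
    have "trip Fm P \<in> {m \<in> ?M0. fst m = [] \<and> snd (snd m) {} \<in> K}"
      using pj inj tM unfolding J_def by (auto dest: inj_onD)
    then have "snd (snd (trip Fm P)) {} \<in> K" by blast
    then have "Fm P \<in> K" using pminus_empty[OF w] by (simp add: trip_def)
    then show "P \<in> L" using assms(6) w by blast
  qed
  have coh: "\<forall>U P Q. iiP k P \<and> iiP k Q \<and> s_word P = [] \<and> s_word Q = [] \<and> t_word P = U \<and> t_word Q = U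
               \<and> \<phi> P = \<phi> Q \<longrightarrow>
               (\<forall>I \<subseteq> {..<length U}. \<phi> (pminus P (tnth P ` I)) = \<phi> (pminus Q (tnth Q ` I)))"
  proof (intro allI impI)
    fix U P Q I
    assume a: "iiP k P \<and> iiP k Q \<and> s_word P = [] \<and> s_word Q = [] \<and> t_word P = U \<and> t_word Q = U \<and> \<phi> P = \<phi> Q"
      and I: "I \<subseteq> {..<length U}"
    have wP: "wf_pom P" and wQ: "wf_pom Q" using a unfolding iiP_def by blast+
    have sP: "srcI P = {}" and sQ: "srcI Q = {}" using a s_word_empty wP wQ by blast+
    have tP: "trip Fm P \<in> ?M0" and tQ: "trip Fm Q \<in> ?M0" using trip_M0[OF catD funD] a by blast+
    have eq: "trip Fm P = trip Fm Q" using a inj tP tQ unfolding \<phi>_def by (auto dest: inj_onD)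
    have tPU: "t_word P = U" "t_word Q = U" using a by blast+
    have "trip Fm (pminus P (tnth P ` I)) = trip Fm (pminus Q (tnth Q ` I))"
      unfolding trip_minus[OF catD funD wP sP tPU(1) I] trip_minus[OF catD funD wQ sQ tPU(2) I]
      unfolding eq by simp
    then show "\<phi> (pminus P (tnth P ` I)) = \<phi> (pminus Q (tnth Q ` I))"
      unfolding \<phi>_def by simp
  qed
  have "finite M" unfolding M_def using fin by blast
  then show ?thesis using mod JM hom LL coh by blast
qed

end
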